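(* Let $\mathcal C$ be a category and $n\ge0$. Every degeneracy map in $Z^n(\mathcal C)$ is a monomorphism.
   Context: Notation: for $n\ge 0$, $[n]$ denotes $\{0,\dots,n-1\}$; $\Delta_+$ is the category of these finite total orders and order-preserving maps. For monotone $\varphi:[n]\to[m]$ define $\hat\varphi:[m+1]\to[n+1]$ by $\hat\varphi(i)=\min(\{j\in[n]:\varphi(j)\ge i\}\cup\{n\})$. Zigzags: in a category $\mathcal C$, a zigzag $X$ of length $n$ is a diagram $X(r_0)\xrightarrow{x_0} X(s_0)\xleftarrow{x'_0} X(r_1)\to\cdots\xrightarrow{x_{n-1}} X(s_{n-1})\xleftarrow{x'_{n-1}} X(r_n)$. A zigzag map $f:X\to Y$ (lengths $n$, $m$) consists of a monotone $f_s:[n]\to[m]$, regular slices $f(r_i):X(r_{\hat{f_s}(i)})\to Y(r_i)$ for $0\le i\le m$ and singular slices $f(s_j):X(s_j)\to Y(s_{f_s(j)})$ for $0\le j<n$, such that for each $0\le i<m$: if $f_s^{-1}(i)\neq\emptyset$ with least element $p$, greatest $q$, then $f(s_p)\circ x_p=y_i\circ f(r_i)$, $f(s_q)\circ x'_q=y'_i\circ f(r_{i+1})$, $f(s_j)\circ x'_j=f(s_{j+1})\circ x_{j+1}$ for $p\le j<q$; if $f_s^{-1}(i)=\emptyset$ then $y_i\circ f(r_i)=y'_i\circ f(r_{i+1})$. Composition: $(g\circ f)_s=g_s\circ f_s$, $(g\circ f)(s_j)=g(s_{f_s(j)})\circ f(s_j)$, $(g\circ f)(r_i)=g(r_i)\circ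 f(r_{\hat{g_s}(i)})$. This gives a category $Z(\mathcal C)$; $Z^0(\mathcal C)=\mathcal C$, $Z^n(\mathcal C)=Z(Z^{n-1}(\mathcal C))$. $\pi:Z(\mathcal C)\to\Delta_+$ sends a zigzag of length $n$ to $[n]$ and $f$ to $f_s$; $f$ is $\pi$-vertical if $\pi(f)$ is an identity; $f:x\to y$ is $\pi$-cocartesian if for every $h:x\to y'$ and $u:\pi(y)\to\pi(y')$ with $u\circ\pi(f)=\pi(h)$ there is a unique $v:y\to y'$ with $v\circ f=h$, $\pi(v)=u$. Degeneracy maps in $Z^n(\mathcal C)$ (by induction on $n$): in $Z^0(\mathcal C)$ the isomorphisms; for $n\ge1$ the maps generated under composition by simple degeneracy maps (the $\pi$-cocartesian maps $f$ with $\pi(f)$ a monomorphism of $\Delta_+$) and parallel degeneracy maps (the $\pi$-vertical maps whose regular and singular slices are all degeneracy maps in $Z^{n-1}(\mathcal C)$). *)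

theory Defs
  imports Main
begin

record 'c cat =
  Ob :: "'c set"
  Hom :: "'c set"
  Dom :: "'c \<Rightarrow> 'c"
  Cod :: "'c \<Rightarrow> 'c"
  Comp :: "'c \<Rightarrow> 'c \<Rightarrow> 'c"   (* Comp C g f = g \<circ> f *)
  Ident :: "'c \<Rightarrow> 'c"

definition category :: "('c, 'z) cat_scheme \<Rightarrow> bool" where
  "category C \<longleftrightarrow>
     (\<forall>f\<in>Hom C. Dom C f \<in> Ob C \<and> Cod C f \<in> Ob C) \<and>
     (\<forall>a\<in>Ob C. Ident C a \<in> Hom C \<and> Dom C (Ident C a) = a \<and> Cod C (Ident C a) = a) \<and>
     (\<forall>f\<in>Hom C. \<forall>g\<in>Hom C. Cod C f = Dom C g \<longrightarrow>
        Comp C g f \<in> Hom C \<and> Dom C (Comp C g f) = Dom C f \<and> Cod C (Comp C g f) = Cod C g) \<and>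
     (\<forall>f\<in>Hom C. \<forall>g\<in>Hom C. \<forall>h\<in>Hom C. Cod C f = Dom C g \<longrightarrow> Cod C g = Dom C h \<longrightarrow>
        Comp C h (Comp C g f) = Comp C (Comp C h g) f) \<and>
     (\<forall>f\<in>Hom C. Comp C f (Ident C (Dom C f)) = f \<and> Comp C (Ident C (Cod C f)) f = f)"

definition monic :: "'c cat \<Rightarrow> 'c \<Rightarrow> bool" where
  "monic E f \<longleftrightarrow> f \<in> Hom E \<and>
     (\<forall>g h. g \<in> Hom E \<longrightarrow> h \<in> Hom E \<longrightarrow> Dom E g = Dom E h \<longrightarrow>
        Cod E g = Dom E f \<longrightarrow> Cod E h = Dom E f \<longrightarrow> Comp E f g = Comp E f h \<longrightarrow> g = h)"

definition isos :: "'c cat \<Rightarrow> 'c set" where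
  "isos E = {f \<in> Hom E. \<exists>g\<in>Hom E. Dom E g = Cod E f \<and> Cod E g = Dom E f \<and>
      Comp E g f = Ident E (Dom E f) \<and> Comp E f g = Ident E (Cod E f)}"

inductive_set gen :: "'c cat \<Rightarrow> 'c set \<Rightarrow> 'c set" for E S where
  base: "f \<in> S \<Longrightarrow> f \<in> gen E S"
| comp: "f \<in> gen E S \<Longrightarrow> g \<in> gen E S \<Longrightarrow> Cod E f = Dom E g \<Longrightarrow> Comp E g f \<in> gen E S"

section \<open>The augmented simplex category \<Delta>+: a map [n] \<rightarrow> [m] is a list of length n\<close>

definition delta_arr :: "nat \<Rightarrow> nat \<Rightarrow> nat list \<Rightarrow> bool" where
  "delta_arr n m \<phi> \<longleftrightarrow> length \<phi> = n \<and> sorted \<phi> \<and> (\<forall>j<n. \<phi> ! j < m)"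

definition delta_comp :: "nat list \<Rightarrow> nat list \<Rightarrow> nat list" where
  "delta_comp \<psi> \<phi> = map (\<lambda>j. \<psi> ! (\<phi> ! j)) [0..<length \<phi>]"

definition delta_mono :: "nat \<Rightarrow> nat \<Rightarrow> nat list \<Rightarrow> bool" where
  "delta_mono n m \<phi> \<longleftrightarrow> delta_arr n m \<phi> \<and>
     (\<forall>k g h. delta_arr k n g \<longrightarrow> delta_arr k n h \<longrightarrow> delta_comp \<phi> g = delta_comp \<phi> h \<longrightarrow> g = h)"

definition hat :: "nat list \<Rightarrow> nat \<Rightarrow> nat" where
  "hat \<phi> i = (LEAST j. j = length \<phi> \<or> (j < length \<phi> \<and> i \<le> \<phi> ! j))"

section \<open>Universe of iterated zigzags\<close>

datatype 'c zt =
    Base (base_val: 'c)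
  | ZObj (zreg: "'c zt list") (zsing: "'c zt list") (zfw: "'c zt list") (zbw: "'c zt list")
      (* regular objects r_0..r_n, singular objects s_0..s_{n-1}, maps x_i : r_i \<rightarrow> s_i, x'_i : r_{i+1} \<rightarrow> s_i *)
  | ZArr (adom: "'c zt") (acod: "'c zt") (amap: "nat list") (areg: "'c zt list") (asing: "'c zt list")
      (* source, target, f_s, regular slices f(r_0..r_m), singular slices f(s_0..s_{n-1}) *)

definition zlen :: "'c zt \<Rightarrow> nat" where
  "zlen X = length (zsing X)"

definition is_zobj :: "'c zt cat \<Rightarrow> 'c zt \<Rightarrow> bool" where
  "is_zobj C X \<longleftrightarrow> (\<exists>rs ss xs xs'. X = ZObj rs ss xs xs' \<and>
     length rs = Suc (length ss) \<and> length xs = length ss \<and> length xs' = length ss \<and>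
     set rs \<subseteq> Ob C \<and> set ss \<subseteq> Ob C \<and>
     (\<forall>i<length ss. xs ! i \<in> Hom C \<and> Dom C (xs ! i) = rs ! i \<and> Cod C (xs ! i) = ss ! i \<and>
        xs' ! i \<in> Hom C \<and> Dom C (xs' ! i) = rs ! Suc i \<and> Cod C (xs' ! i) = ss ! i))"

definition zig_cond :: "'c zt cat \<Rightarrow> 'c zt \<Rightarrow> 'c zt \<Rightarrow> nat list \<Rightarrow> 'c zt list \<Rightarrow> 'c zt list \<Rightarrow> nat \<Rightarrow> bool" where
  "zig_cond C X Y fs fr fsg i \<longleftrightarrow>
     (let P = {j. j < length fs \<and> fs ! j = i}; x = zfw X; x' = zbw X; y = zfw Y; y' = zbw Y in
      (P \<noteq> {} \<longrightarrow>
         Comp C (fsg ! Min P) (x ! Min P) = Comp C (y ! i) (fr ! i) \<and>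
         Comp C (fsg ! Max P) (x' ! Max P) = Comp C (y' ! i) (fr ! Suc i) \<and>
         (\<forall>j. Min P \<le> j \<and> j < Max P \<longrightarrow> Comp C (fsg ! j) (x' ! j) = Comp C (fsg ! Suc j) (x ! Suc j))) \<and>
      (P = {} \<longrightarrow> Comp C (y ! i) (fr ! i) = Comp C (y' ! i) (fr ! Suc i)))"

definition is_zarr :: "'c zt cat \<Rightarrow> 'c zt \<Rightarrow> bool" where
  "is_zarr C f \<longleftrightarrow> (\<exists>X Y fs fr fsg. f = ZArr X Y fs fr fsg \<and> is_zobj C X \<and> is_zobj C Y \<and>
     delta_arr (zlen X) (zlen Y) fs \<and>
     length fr = Suc (zlen Y) \<and> length fsg = zlen X \<and>
     (\<forall>i\<le>zlen Y. fr ! i \<in> Hom C \<and> Dom C (fr ! i) = zreg X ! hat fs i \<and> Cod C (fr ! i) = zreg Y ! i) \<and>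
     (\<forall>j<zlen X. fsg ! j \<in> Hom C \<and> Dom C (fsg ! j) = zsing X ! j \<and> Cod C (fsg ! j) = zsing Y ! (fs ! j)) \<and>
     (\<forall>i<zlen Y. zig_cond C X Y fs fr fsg i))"

definition zcomp :: "'c zt cat \<Rightarrow> 'c zt \<Rightarrow> 'c zt \<Rightarrow> 'c zt" where
  "zcomp C g f = ZArr (adom f) (acod g)
     (delta_comp (amap g) (amap f))
     (map (\<lambda>i. Comp C (areg g ! i) (areg f ! hat (amap g) i)) [0..<length (areg g)])
     (map (\<lambda>j. Comp C (asing g ! (amap f ! j)) (asing f ! j)) [0..<length (amap f)])"

definition zid :: "'c zt cat \<Rightarrow> 'c zt \<Rightarrow> 'c zt" where
  "zid C X = ZArr X X [0..<zlen X] (map (Ident C) (zreg X)) (map (Ident C) (zsing X))"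

definition Z :: "'c zt cat \<Rightarrow> 'c zt cat" where
  "Z C = \<lparr>Ob = {X. is_zobj C X}, Hom = {f. is_zarr C f}, Dom = adom, Cod = acod,
          Comp = zcomp C, Ident = zid C\<rparr>"

definition lift :: "'c cat \<Rightarrow> 'c zt cat" where
  "lift C = \<lparr>Ob = Base ` Ob C, Hom = Base ` Hom C,
             Dom = (\<lambda>f. Base (Dom C (base_val f))), Cod = (\<lambda>f. Base (Cod C (base_val f))),
             Comp = (\<lambda>g f. Base (Comp C (base_val g) (base_val f))),
             Ident = (\<lambda>a. Base (Ident C (base_val a)))\<rparr>"

text \<open>Z^n(C), with Z^0(C) an isomorphic copy of C\<close>
definition Zit :: "nat \<Rightarrow> 'c cat \<Rightarrow> 'c zt cat" where
  "Zit n C = (Z ^^ n) (lift C)"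

section \<open>The projection \<pi> : Z(D) \<rightarrow> \<Delta>+ and degeneracy maps\<close>

definition vertical :: "'c zt \<Rightarrow> bool" where
  "vertical f \<longleftrightarrow> zlen (adom f) = zlen (acod f) \<and> amap f = [0..<zlen (adom f)]"

definition cocartesian :: "'c zt cat \<Rightarrow> 'c zt \<Rightarrow> bool" where
  "cocartesian D f \<longleftrightarrow> f \<in> Hom (Z D) \<and>
     (\<forall>h u. h \<in> Hom (Z D) \<longrightarrow> adom h = adom f \<longrightarrow>
        delta_arr (zlen (acod f)) (zlen (acod h)) u \<longrightarrow> delta_comp u (amap f) = amap h \<longrightarrow>
        (\<exists>!v. v \<in> Hom (Z D) \<and> adom v = acod f \<and> acod v = acod h \<and>
              zcomp D v f = h \<and> amap v = u))"

definition simple_degen :: "'c zt cat \<Rightarrow> 'c zt set" where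
  "simple_degen D = {f. cocartesian D f \<and> delta_mono (zlen (adom f)) (zlen (acod f)) (amap f)}"

definition parallel_degen :: "'c zt cat \<Rightarrow> 'c zt set \<Rightarrow> 'c zt set" where
  "parallel_degen D S = {f \<in> Hom (Z D). vertical f \<and> set (areg f) \<subseteq> S \<and> set (asing f) \<subseteq> S}"

fun degen :: "nat \<Rightarrow> 'c cat \<Rightarrow> 'c zt set" where
  "degen 0 C = isos (lift C)"
| "degen (Suc k) C = gen (Z (Zit k C)) (simple_degen (Zit k C) \<union> parallel_degen (Zit k C) (degen k C))"

end

theory Submission
  imports Defs
begin


lemma cat_dom_ob: "category E \<Longrightarrow> f \<in> Hom E \<Longrightarrow> Dom E f \<in> Ob E"
  unfolding category_def by blast
lemma cat_cod_ob: "category E \<Longrightarrow> f \<in> Hom E \<Longrightarrow> Cod E f \<in> Ob E"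
  unfolding category_def by blast
lemma cat_id_hom: "category E \<Longrightarrow> a \<in> Ob E \<Longrightarrow> Ident E a \<in> Hom E"
  unfolding category_def by blast
lemma cat_id_dom: "category E \<Longrightarrow> a \<in> Ob E \<Longrightarrow> Dom E (Ident E a) = a"
  unfolding category_def by blast
lemma cat_id_cod: "category E \<Longrightarrow> a \<in> Ob E \<Longrightarrow> Cod E (Ident E a) = a"
  unfolding category_def by blast
lemma cat_comp_hom: "category E \<Longrightarrow> f \<in> Hom E \<Longrightarrow> g \<in> Hom E \<Longrightarrow> Cod E f = Dom E g \<Longrightarrow> Comp E g f \<in> Hom E"
  unfolding category_def by blast
lemma cat_comp_dom: "category E \<Longrightarrow> f \<in> Hom E \<Longrightarrow> g \<in> Hom E \<Longrightarrow> Cod E f = Dom E g \<Longrightarrow> Dom E (Comp E g f) = Dom E f"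
  unfolding category_def by blast
lemma cat_comp_cod: "category E \<Longrightarrow> f \<in> Hom E \<Longrightarrow> g \<in> Hom E \<Longrightarrow> Cod E f = Dom E g \<Longrightarrow> Cod E (Comp E g f) = Cod E g"
  unfolding category_def by blast
lemma cat_assoc: "category E \<Longrightarrow> f \<in> Hom E \<Longrightarrow> g \<in> Hom E \<Longrightarrow> h \<in> Hom E \<Longrightarrow> Cod E f = Dom E g \<Longrightarrow> Cod E g = Dom E h \<Longrightarrow>
   Comp E h (Comp E g f) = Comp E (Comp E h g) f"
  unfolding category_def by blast
lemma cat_id_left: "category E \<Longrightarrow> f \<in> Hom E \<Longrightarrow> Cod E f = b \<Longrightarrow> Comp E (Ident E b) f = f"
  unfolding category_def by blast
lemma cat_id_right: "category E \<Longrightarrow> f \<in> Hom E \<Longrightarrow> Dom E f = b \<Longrightarrow> Comp E f (Ident E b) = f"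
  unfolding category_def by blast

lemma rw_right:
  assumes "category E" "A \<in> Hom E" "B \<in> Hom E" "C \<in> Hom E" "B' \<in> Hom E" "C' \<in> Hom E"
    "Cod E C = Dom E B" "Cod E B = Dom E A" "Cod E C' = Dom E B'" "Cod E B' = Dom E A"
    "Comp E B C = Comp E B' C'"
  shows "Comp E (Comp E A B) C = Comp E (Comp E A B') C'"
  using assms by (metis cat_assoc)

lemma split_mono_cancel:
  assumes "category E" "f \<in> Hom E" "r \<in> Hom E" "Cod E f = Dom E r" "Comp E r f = Ident E (Dom E f)"
    "a \<in> Hom E" "b \<in> Hom E" "Cod E a = Dom E f" "Cod E b = Dom E f" "Comp E f a = Comp E f b"
  shows "a = b"
proof -
  have "a = Comp E (Comp E r f) a" using assms by (simp add: cat_id_left)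
  also have "\<dots> = Comp E r (Comp E f a)" using assms(1-4,6,8) by (simp add: cat_assoc)
  also have "\<dots> = Comp E r (Comp E f b)" using assms(10) by (rule arg_cong)
  also have "\<dots> = Comp E (Comp E r f) b" using assms(1-4,7,9) by (simp add: cat_assoc)
  also have "\<dots> = b" using assms by (simp add: cat_id_left)
  finally show ?thesis .
qed

lemma iso_monic:
  assumes "category E" "f \<in> isos E" shows "monic E f"
proof -
  obtain g where g: "g \<in> Hom E" "Dom E g = Cod E f" "Cod E g = Dom E f" "Comp E g f = Ident E (Dom E f)"
    "f \<in> Hom E" using assms(2) unfolding isos_def by blast
  show ?thesis unfolding monic_def using g split_mono_cancel[OF assms(1) g(5) g(1)] by auto
qed

lemma comp_monic:
  assumes "category E" "monic E f" "monic E g" "Cod E f = Dom E g"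
  shows "monic E (Comp E g f)"
proof -
  have f: "f \<in> Hom E" and g: "g \<in> Hom E" using assms unfolding monic_def by auto
  show ?thesis unfolding monic_def
  proof (intro conjI allI impI)
    show "Comp E g f \<in> Hom E" using assms f g by (simp add: cat_comp_hom)
    fix a b assume ab: "a \<in> Hom E" "b \<in> Hom E" "Dom E a = Dom E b"
      "Cod E a = Dom E (Comp E g f)" "Cod E b = Dom E (Comp E g f)" "Comp E (Comp E g f) a = Comp E (Comp E g f) b"
    have ca: "Cod E a = Dom E f" "Cod E b = Dom E f" using ab assms f g by (simp_all add: cat_comp_dom)
    have "Comp E g (Comp E f a) = Comp E g (Comp E f b)"
      using ab ca assms f g by (simp add: cat_assoc)
    moreover have "Comp E f a \<in> Hom E" "Comp E f b \<in> Hom E" using ab ca assms f g by (simp_all add: cat_comp_hom)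
    moreover have "Dom E (Comp E f a) = Dom E (Comp E f b)" using ab ca assms f g by (simp add: cat_comp_dom)
    moreover have "Cod E (Comp E f a) = Dom E g" "Cod E (Comp E f b) = Dom E g" using ab ca assms f g by (simp_all add: cat_comp_cod)
    ultimately have "Comp E f a = Comp E f b" using assms(3) unfolding monic_def by blast
    then show "a = b" using assms(2) ab ca unfolding monic_def by blast
  qed
qed

lemma delta_comp_length[simp]: "length (delta_comp \<psi> \<phi>) = length \<phi>"
  by (simp add: delta_comp_def)
lemma delta_comp_nth[simp]: "j < length \<phi> \<Longrightarrow> delta_comp \<psi> \<phi> ! j = \<psi> ! (\<phi> ! j)"
  by (simp add: delta_comp_def)

lemma delta_arr_comp: "delta_arr n m \<phi> \<Longrightarrow> delta_arr m l \<psi> \<Longrightarrow> delta_arr n l (delta_comp \<psi> \<phi>)"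
  unfolding delta_arr_def by (auto simp: sorted_iff_nth_mono)

lemma hat_le: "hat \<phi> i \<le> length \<phi>"
  unfolding hat_def by (rule Least_le) simp

lemma hat_galois: assumes "sorted \<phi>" "k < length \<phi>" shows "(hat \<phi> i \<le> k) = (i \<le> \<phi> ! k)"
proof
  assume "i \<le> \<phi> ! k" then show "hat \<phi> i \<le> k" unfolding hat_def using assms by (intro Least_le) simp
next
  assume h: "hat \<phi> i \<le> k"
  have "hat \<phi> i = length \<phi> \<or> (hat \<phi> i < length \<phi> \<and> i \<le> \<phi> ! hat \<phi> i)"
    unfolding hat_def by (rule LeastI[of _ "length \<phi>"]) simp
  then show "i \<le> \<phi> ! k" using h assms by (auto simp: sorted_iff_nth_mono intro: order_trans)
qed

lemma hat_unique: assumes "sorted \<phi>" "h \<le> length \<phi>" "\<forall>k<length \<phi>. (h \<le> k) = (i \<le> \<phi> ! k)"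
  shows "hat \<phi> i = h"
proof (rule ccontr)
  assume ne: "hat \<phi> i \<noteq> h"
  have g: "\<forall>k<length \<phi>. (hat \<phi> i \<le> k) = (h \<le> k)" using assms hat_galois by auto
  show False
  proof (cases "hat \<phi> i < h")
    case True then show ?thesis using g[rule_format, of "hat \<phi> i"] assms(2) by simp
  next
    case False then have "h < hat \<phi> i" using ne by simp
    then show ?thesis using g[rule_format, of h] hat_le[of \<phi> i] by simp
  qed
qed

lemma hat_id: "i \<le> n \<Longrightarrow> hat [0..<n] i = i"
  by (rule hat_unique) auto

lemma hat_comp: assumes "delta_arr n m \<phi>" "delta_arr m l \<psi>"
  shows "hat (delta_comp \<psi> \<phi>) i = hat \<phi> (hat \<psi> i)"
proof (rule hat_unique)
  show "sorted (delta_comp \<psi> \<phi>)" using delta_arr_comp[OF assms] by (simp add: delta_arr_def)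
  show "hat \<phi> (hat \<psi> i) \<le> length (delta_comp \<psi> \<phi>)" using hat_le by simp
  show "\<forall>k<length (delta_comp \<psi> \<phi>). (hat \<phi> (hat \<psi> i) \<le> k) = (i \<le> delta_comp \<psi> \<phi> ! k)"
    using assms by (auto simp: delta_arr_def hat_galois)
qed

lemma hat_mono: assumes "sorted \<phi>" "i \<le> i'" shows "hat \<phi> i \<le> hat \<phi> i'"
proof (cases "hat \<phi> i' < length \<phi>")
  case True
  have "i' \<le> \<phi> ! hat \<phi> i'" using hat_galois[OF assms(1) True, of i'] by simp
  then show ?thesis using hat_galois[OF assms(1) True, of i] assms(2) by simp
next
  case False then show ?thesis using hat_le[of \<phi> i] hat_le[of \<phi> i'] by simp
qed

lemma hat_zero: "hat \<phi> 0 = 0"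
  unfolding hat_def by (rule Least_eq_0) (cases \<phi>, auto)

lemma hat_top: "delta_arr n m \<phi> \<Longrightarrow> hat \<phi> m = n"
  by (rule hat_unique) (auto simp: delta_arr_def)

lemma in_set_hat: assumes "sorted \<phi>" shows "(k \<in> set \<phi>) = (hat \<phi> k < hat \<phi> (Suc k))"
proof
  assume "k \<in> set \<phi>"
  then obtain j where j: "j < length \<phi>" "\<phi> ! j = k" by (auto simp: in_set_conv_nth)
  then have "hat \<phi> k \<le> j" "\<not> hat \<phi> (Suc k) \<le> j" using hat_galois[OF assms j(1)] by auto
  then show "hat \<phi> k < hat \<phi> (Suc k)" by simp
next
  assume h: "hat \<phi> k < hat \<phi> (Suc k)"
  then have j: "hat \<phi> k < length \<phi>" using hat_le[of \<phi> "Suc k"] by simp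
  have "k \<le> \<phi> ! hat \<phi> k" "\<not> Suc k \<le> \<phi> ! hat \<phi> k"
    using hat_galois[OF assms j, of k] hat_galois[OF assms j, of "Suc k"] h by auto
  then have "\<phi> ! hat \<phi> k = k" by simp
  then show "k \<in> set \<phi>" using j by (metis nth_mem)
qed



lemma zobj_shape: "is_zobj D X \<Longrightarrow> X = ZObj (zreg X) (zsing X) (zfw X) (zbw X)"
  unfolding is_zobj_def by auto
lemma zobj_lens: assumes "is_zobj D X"
  shows "length (zreg X) = Suc (zlen X)" "length (zfw X) = zlen X" "length (zbw X) = zlen X"
  using assms unfolding is_zobj_def zlen_def by auto
lemma zobj_reg_ob: "is_zobj D X \<Longrightarrow> i \<le> zlen X \<Longrightarrow> zreg X ! i \<in> Ob D"
  unfolding is_zobj_def zlen_def by (auto simp: less_Suc_eq_le[symmetric])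
lemma zobj_sing_ob: "is_zobj D X \<Longrightarrow> i < zlen X \<Longrightarrow> zsing X ! i \<in> Ob D"
  unfolding is_zobj_def zlen_def by auto
lemma zfw_hom: "is_zobj D X \<Longrightarrow> i < zlen X \<Longrightarrow> zfw X ! i \<in> Hom D"
  unfolding is_zobj_def zlen_def by auto
lemma zfw_dom: "is_zobj D X \<Longrightarrow> i < zlen X \<Longrightarrow> Dom D (zfw X ! i) = zreg X ! i"
  unfolding is_zobj_def zlen_def by auto
lemma zfw_cod: "is_zobj D X \<Longrightarrow> i < zlen X \<Longrightarrow> Cod D (zfw X ! i) = zsing X ! i"
  unfolding is_zobj_def zlen_def by auto
lemma zbw_hom: "is_zobj D X \<Longrightarrow> i < zlen X \<Longrightarrow> zbw X ! i \<in> Hom D"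
  unfolding is_zobj_def zlen_def by auto
lemma zbw_dom: "is_zobj D X \<Longrightarrow> i < zlen X \<Longrightarrow> Dom D (zbw X ! i) = zreg X ! Suc i"
  unfolding is_zobj_def zlen_def by auto
lemma zbw_cod: "is_zobj D X \<Longrightarrow> i < zlen X \<Longrightarrow> Cod D (zbw X ! i) = zsing X ! i"
  unfolding is_zobj_def zlen_def by auto

lemmas zobj_simps = zobj_lens zobj_reg_ob zobj_sing_ob zfw_hom zfw_dom zfw_cod zbw_hom zbw_dom zbw_cod

lemma is_zobjI:
  assumes "length rs = Suc (length ss)" "length xs = length ss" "length xs' = length ss"
    "\<And>i. i \<le> length ss \<Longrightarrow> rs ! i \<in> Ob D" "\<And>i. i < length ss \<Longrightarrow> ss ! i \<in> Ob D"
    "\<And>i. i < length ss \<Longrightarrow> xs ! i \<in> Hom D \<and> Dom D (xs ! i) = rs ! i \<and> Cod D (xs ! i) = ss ! i"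
    "\<And>i. i < length ss \<Longrightarrow> xs' ! i \<in> Hom D \<and> Dom D (xs' ! i) = rs ! Suc i \<and> Cod D (xs' ! i) = ss ! i"
  shows "is_zobj D (ZObj rs ss xs xs')"
  unfolding is_zobj_def using assms
  by (auto simp: set_conv_nth less_Suc_eq_le)

lemma zarr_facts: assumes "is_zarr D f" shows
  "f = ZArr (adom f) (acod f) (amap f) (areg f) (asing f)"
  "is_zobj D (adom f)" "is_zobj D (acod f)"
  "delta_arr (zlen (adom f)) (zlen (acod f)) (amap f)"
  "length (areg f) = Suc (zlen (acod f))" "length (asing f) = zlen (adom f)"
  "length (amap f) = zlen (adom f)"
  "\<forall>i\<le>zlen (acod f). areg f ! i \<in> Hom D \<and> Dom D (areg f ! i) = zreg (adom f) ! hat (amap f) i \<and> Cod D (areg f ! i) = zreg (acod f) ! i"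
  "\<forall>j<zlen (adom f). asing f ! j \<in> Hom D \<and> Dom D (asing f ! j) = zsing (adom f) ! j \<and> Cod D (asing f ! j) = zsing (acod f) ! (amap f ! j)"
  "\<forall>i<zlen (acod f). zig_cond D (adom f) (acod f) (amap f) (areg f) (asing f) i"
  using assms unfolding is_zarr_def by (auto simp: delta_arr_def)

lemma is_zarrI:
  assumes "is_zobj D X" "is_zobj D Y" "delta_arr (zlen X) (zlen Y) fs"
    "length fr = Suc (zlen Y)" "length fsg = zlen X"
    "\<forall>i\<le>zlen Y. fr ! i \<in> Hom D \<and> Dom D (fr ! i) = zreg X ! hat fs i \<and> Cod D (fr ! i) = zreg Y ! i"
    "\<forall>j<zlen X. fsg ! j \<in> Hom D \<and> Dom D (fsg ! j) = zsing X ! j \<and> Cod D (fsg ! j) = zsing Y ! (fs ! j)"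
    "\<forall>i<zlen Y. zig_cond D X Y fs fr fsg i"
  shows "is_zarr D (ZArr X Y fs fr fsg)"
  unfolding is_zarr_def using assms by blast

definition zloc :: "'c zt cat \<Rightarrow> 'c zt \<Rightarrow> 'c zt \<Rightarrow> nat list \<Rightarrow> 'c zt list \<Rightarrow> 'c zt list \<Rightarrow> bool" where
"zloc D X Y fs fr fsg \<longleftrightarrow>
  (\<forall>j. Suc j < length fs \<longrightarrow> fs!j = fs!Suc j \<longrightarrow> Comp D (fsg!j) (zbw X!j) = Comp D (fsg!Suc j) (zfw X!Suc j)) \<and>
  (\<forall>j<length fs. (j = 0 \<or> fs!(j-1) < fs!j) \<longrightarrow> Comp D (fsg!j) (zfw X!j) = Comp D (zfw Y!(fs!j)) (fr!(fs!j))) \<and>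
  (\<forall>j<length fs. (Suc j = length fs \<or> fs!j < fs!Suc j) \<longrightarrow> Comp D (fsg!j) (zbw X!j) = Comp D (zbw Y!(fs!j)) (fr!Suc(fs!j))) \<and>
  (\<forall>i<zlen Y. i \<notin> set fs \<longrightarrow> Comp D (zfw Y!i) (fr!i) = Comp D (zbw Y!i) (fr!Suc i))"

lemma zig_iff_loc:
  assumes "sorted fs" "\<forall>j<length fs. fs ! j < zlen Y"
  shows "(\<forall>i<zlen Y. zig_cond D X Y fs fr fsg i) = zloc D X Y fs fr fsg"
proof
  assume Z: "\<forall>i<zlen Y. zig_cond D X Y fs fr fsg i"
  let ?P = "\<lambda>i. {j. j < length fs \<and> fs ! j = i}"
  have fin: "finite (?P i)" for i by simp
  have mono: "fs ! a \<le> fs ! b" if "a \<le> b" "b < length fs" for a b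
    using assms(1) that by (simp add: sorted_iff_nth_mono)
  show "zloc D X Y fs fr fsg" unfolding zloc_def
  proof (intro conjI allI impI)
    fix j assume j: "Suc j < length fs" "fs ! j = fs ! Suc j"
    let ?i = "fs ! j"
    have i: "?i < zlen Y" using j assms(2) by simp
    have ne: "?P ?i \<noteq> {}" using j by auto
    have "Min (?P ?i) \<le> j" using j by (intro Min_le) auto
    moreover have "Suc j \<le> Max (?P ?i)" using j by (intro Max_ge) auto
    ultimately show "Comp D (fsg ! j) (zbw X ! j) = Comp D (fsg ! Suc j) (zfw X ! Suc j)"
      using Z[rule_format, OF i] ne unfolding zig_cond_def Let_def by auto
  next
    fix j assume j: "j < length fs" "j = 0 \<or> fs ! (j - 1) < fs ! j"
    let ?i = "fs ! j"
    have i: "?i < zlen Y" using j assms(2) by simp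
    have ne: "?P ?i \<noteq> {}" using j by auto
    have "Min (?P ?i) = j"
    proof (rule Min_eqI)
      fix y assume y: "y \<in> ?P ?i"
      show "j \<le> y"
      proof (rule ccontr)
        assume yj: "\<not> j \<le> y"
        then have j0: "j \<noteq> 0" by simp
        have "fs ! y \<le> fs ! (j - 1)" using mono[of y "j - 1"] j yj by auto
        then show False using j y j0 by auto
      qed
    qed (use j in auto)
    then show "Comp D (fsg ! j) (zfw X ! j) = Comp D (zfw Y ! (fs ! j)) (fr ! (fs ! j))"
      using Z[rule_format, OF i] ne unfolding zig_cond_def Let_def by auto
  next
    fix j assume j: "j < length fs" "Suc j = length fs \<or> fs ! j < fs ! Suc j"
    let ?i = "fs ! j"
    have i: "?i < zlen Y" using j assms(2) by simp
    have ne: "?P ?i \<noteq> {}" using j by auto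
    have "Max (?P ?i) = j"
    proof (rule Max_eqI)
      fix y assume y: "y \<in> ?P ?i"
      show "y \<le> j"
      proof (rule ccontr)
        assume yj: "\<not> y \<le> j"
        then have sj: "Suc j < length fs" using y by auto
        have "fs ! Suc j \<le> fs ! y" using mono[of "Suc j" y] y yj by auto
        then show False using j y sj by auto
      qed
    qed (use j in auto)
    then show "Comp D (fsg ! j) (zbw X ! j) = Comp D (zbw Y ! (fs ! j)) (fr ! Suc (fs ! j))"
      using Z[rule_format, OF i] ne unfolding zig_cond_def Let_def by auto
  next
    fix i assume i: "i < zlen Y" "i \<notin> set fs"
    have "?P i = {}" using i by (auto simp: in_set_conv_nth)
    then show "Comp D (zfw Y ! i) (fr ! i) = Comp D (zbw Y ! i) (fr ! Suc i)"
      using Z[rule_format, OF i(1)] unfolding zig_cond_def Let_def by auto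
  qed
next
  assume L: "zloc D X Y fs fr fsg"
  have mono: "fs ! a \<le> fs ! b" if "a \<le> b" "b < length fs" for a b
    using assms(1) that by (simp add: sorted_iff_nth_mono)
  show "\<forall>i<zlen Y. zig_cond D X Y fs fr fsg i"
  proof (intro allI impI)
    fix i assume i: "i < zlen Y"
    let ?P = "{j. j < length fs \<and> fs ! j = i}"
    have fin: "finite ?P" by simp
    show "zig_cond D X Y fs fr fsg i" unfolding zig_cond_def Let_def
    proof (rule conjI; intro impI)
      assume ne: "?P \<noteq> {}"
      define p where "p = Min ?P"
      define q where "q = Max ?P"
      have p: "p \<in> ?P" unfolding p_def using fin ne by (rule Min_in)
      have q: "q \<in> ?P" unfolding q_def using fin ne by (rule Max_in)
      have pmin: "\<And>y. y \<in> ?P \<Longrightarrow> p \<le> y" unfolding p_def using fin by simp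
      have qmax: "\<And>y. y \<in> ?P \<Longrightarrow> y \<le> q" unfolding q_def using fin by simp
      have "p = 0 \<or> fs ! (p - 1) < fs ! p"
      proof (cases "p = 0")
        case False
        have "fs ! (p - 1) \<le> fs ! p" using mono[of "p-1" p] p by auto
        moreover have "fs ! (p - 1) \<noteq> i"
        proof
          assume "fs ! (p - 1) = i"
          then have "p - 1 \<in> ?P" using p by auto
          then show False using pmin[of "p - 1"] False by auto
        qed
        ultimately show ?thesis using p by auto
      qed simp
      then have 1: "Comp D (fsg ! p) (zfw X ! p) = Comp D (zfw Y ! i) (fr ! i)"
        using L p unfolding zloc_def by auto
      have "Suc q = length fs \<or> fs ! q < fs ! Suc q"
      proof (cases "Suc q = length fs")
        case False
        then have sq: "Suc q < length fs" using q by auto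
        have "fs ! q \<le> fs ! Suc q" using mono[of q "Suc q"] sq by auto
        moreover have "fs ! Suc q \<noteq> i" using qmax[of "Suc q"] sq by auto
        ultimately show ?thesis using q by auto
      qed simp
      then have 2: "Comp D (fsg ! q) (zbw X ! q) = Comp D (zbw Y ! i) (fr ! Suc i)"
        using L q unfolding zloc_def by auto
      have 3: "Comp D (fsg ! j) (zbw X ! j) = Comp D (fsg ! Suc j) (zfw X ! Suc j)"
        if "p \<le> j" "j < q" for j
      proof -
        have "i \<le> fs ! j" using mono[of p j] p q that by auto
        moreover have "fs ! j \<le> fs ! Suc j" "fs ! Suc j \<le> i" using mono[of j "Suc j"] mono[of "Suc j" q] p q that by auto
        ultimately show ?thesis using L that q unfolding zloc_def by auto
      qed
      show "Comp D (fsg ! Min ?P) (zfw X ! Min ?P) = Comp D (zfw Y ! i) (fr ! i) \<and>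
          Comp D (fsg ! Max ?P) (zbw X ! Max ?P) = Comp D (zbw Y ! i) (fr ! Suc i) \<and>
          (\<forall>j. Min ?P \<le> j \<and> j < Max ?P \<longrightarrow> Comp D (fsg ! j) (zbw X ! j) = Comp D (fsg ! Suc j) (zfw X ! Suc j))"
        using 1 2 3 unfolding p_def[symmetric] q_def[symmetric] by blast
    next
      assume "?P = {}"
      then have "i \<notin> set fs" by (auto simp: in_set_conv_nth)
      then show "Comp D (zfw Y ! i) (fr ! i) = Comp D (zbw Y ! i) (fr ! Suc i)"
        using L i unfolding zloc_def by auto
    qed
  qed
qed



lemma sorted_mono_nth: "sorted xs \<Longrightarrow> a \<le> b \<Longrightarrow> b < length xs \<Longrightarrow> xs ! a \<le> xs ! b"
  by (simp add: sorted_iff_nth_mono)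

lemma comp_loc:
  assumes D: "category D"
    and X: "is_zobj D X" and Y: "is_zobj D Y" and W: "is_zobj D W"
    and n: "zlen X = n" and m: "zlen Y = m" and l: "zlen W = l"
    and fs: "delta_arr n m fs" and gs: "delta_arr m l gs"
    and fr: "\<forall>i\<le>m. fr ! i \<in> Hom D \<and> Dom D (fr ! i) = zreg X ! hat fs i \<and> Cod D (fr ! i) = zreg Y ! i"
    and fsg: "\<forall>j<n. fsg ! j \<in> Hom D \<and> Dom D (fsg ! j) = zsing X ! j \<and> Cod D (fsg ! j) = zsing Y ! (fs ! j)"
    and gr: "\<forall>i\<le>l. gr ! i \<in> Hom D \<and> Dom D (gr ! i) = zreg Y ! hat gs i \<and> Cod D (gr ! i) = zreg W ! i"
    and gsg: "\<forall>j<m. gsg ! j \<in> Hom D \<and> Dom D (gsg ! j) = zsing Y ! j \<and> Cod D (gsg ! j) = zsing W ! (gs ! j)"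
    and Lf: "zloc D X Y fs fr fsg" and Lg: "zloc D Y W gs gr gsg"
  shows "zloc D X W (delta_comp gs fs) (map (\<lambda>i. Comp D (gr ! i) (fr ! hat gs i)) [0..<Suc l])
           (map (\<lambda>j. Comp D (gsg ! (fs ! j)) (fsg ! j)) [0..<n])"
proof -
  have lfs: "length fs = n" and sfs: "sorted fs" and bfs: "\<And>j. j < n \<Longrightarrow> fs ! j < m"
    using fs by (auto simp: delta_arr_def)
  have lgs: "length gs = m" and sgs: "sorted gs" and bgs: "\<And>j. j < m \<Longrightarrow> gs ! j < l"
    using gs by (auto simp: delta_arr_def)
  have frH: "\<And>i. i \<le> m \<Longrightarrow> fr ! i \<in> Hom D" and frD: "\<And>i. i \<le> m \<Longrightarrow> Dom D (fr ! i) = zreg X ! hat fs i"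
    and frC: "\<And>i. i \<le> m \<Longrightarrow> Cod D (fr ! i) = zreg Y ! i" using fr by auto
  have fsgH: "\<And>i. i < n \<Longrightarrow> fsg ! i \<in> Hom D" and fsgD: "\<And>i. i < n \<Longrightarrow> Dom D (fsg ! i) = zsing X ! i"
    and fsgC: "\<And>i. i < n \<Longrightarrow> Cod D (fsg ! i) = zsing Y ! (fs ! i)" using fsg by auto
  have grH: "\<And>i. i \<le> l \<Longrightarrow> gr ! i \<in> Hom D" and grD: "\<And>i. i \<le> l \<Longrightarrow> Dom D (gr ! i) = zreg Y ! hat gs i"
    and grC: "\<And>i. i \<le> l \<Longrightarrow> Cod D (gr ! i) = zreg W ! i" using gr by auto
  have gsgH: "\<And>i. i < m \<Longrightarrow> gsg ! i \<in> Hom D" and gsgD: "\<And>i. i < m \<Longrightarrow> Dom D (gsg ! i) = zsing Y ! i"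
    and gsgC: "\<And>i. i < m \<Longrightarrow> Cod D (gsg ! i) = zsing W ! (gs ! i)" using gsg by auto
  note zX = zobj_simps[OF X, unfolded n] and zY = zobj_simps[OF Y, unfolded m] and zZ = zobj_simps[OF W, unfolded l]
  note ty = frH frD frC fsgH fsgD fsgC grH grD grC gsgH gsgD gsgC zX zY zZ
  have hatfs: "\<And>i. hat fs i \<le> n" using hat_le[of fs] lfs by simp
  have hatgs: "\<And>i. hat gs i \<le> m" using hat_le[of gs] lgs by simp
  have galf: "\<And>j i. j < n \<Longrightarrow> (hat fs i \<le> j) = (i \<le> fs ! j)" using hat_galois[OF sfs] lfs by simp
  have galg: "\<And>j i. j < m \<Longrightarrow> (hat gs i \<le> j) = (i \<le> gs ! j)" using hat_galois[OF sgs] lgs by simp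
  have monf: "\<And>a b. a \<le> b \<Longrightarrow> b < n \<Longrightarrow> fs ! a \<le> fs ! b" using sorted_mono_nth[OF sfs] lfs by simp
  have mong: "\<And>a b. a \<le> b \<Longrightarrow> b < m \<Longrightarrow> gs ! a \<le> gs ! b" using sorted_mono_nth[OF sgs] lgs by simp
  have hmf: "\<And>a b. a \<le> b \<Longrightarrow> hat fs a \<le> hat fs b" using hat_mono[OF sfs] by simp
  have hmg: "\<And>a b. a \<le> b \<Longrightarrow> hat gs a \<le> hat gs b" using hat_mono[OF sgs] by simp
  have setf: "\<And>k. (k \<in> set fs) = (hat fs k < hat fs (Suc k))" using in_set_hat[OF sfs] by simp
  have setg: "\<And>k. (k \<in> set gs) = (hat gs k < hat gs (Suc k))" using in_set_hat[OF sgs] by simp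

  have If: "\<And>j. Suc j < n \<Longrightarrow> fs!j = fs!Suc j \<Longrightarrow> Comp D (fsg!j) (zbw X!j) = Comp D (fsg!Suc j) (zfw X!Suc j)"
    and Lf': "\<And>j. j < n \<Longrightarrow> (j = 0 \<or> fs!(j-1) < fs!j) \<Longrightarrow> Comp D (fsg!j) (zfw X!j) = Comp D (zfw Y!(fs!j)) (fr!(fs!j))"
    and Rf: "\<And>j. j < n \<Longrightarrow> (Suc j = n \<or> fs!j < fs!Suc j) \<Longrightarrow> Comp D (fsg!j) (zbw X!j) = Comp D (zbw Y!(fs!j)) (fr!Suc(fs!j))"
    and Ef: "\<And>i. i < m \<Longrightarrow> i \<notin> set fs \<Longrightarrow> Comp D (zfw Y!i) (fr!i) = Comp D (zbw Y!i) (fr!Suc i)"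
    using Lf unfolding zloc_def lfs m by auto
  have Ig: "\<And>j. Suc j < m \<Longrightarrow> gs!j = gs!Suc j \<Longrightarrow> Comp D (gsg!j) (zbw Y!j) = Comp D (gsg!Suc j) (zfw Y!Suc j)"
    and Lg': "\<And>j. j < m \<Longrightarrow> (j = 0 \<or> gs!(j-1) < gs!j) \<Longrightarrow> Comp D (gsg!j) (zfw Y!j) = Comp D (zfw W!(gs!j)) (gr!(gs!j))"
    and Rg: "\<And>j. j < m \<Longrightarrow> (Suc j = m \<or> gs!j < gs!Suc j) \<Longrightarrow> Comp D (gsg!j) (zbw Y!j) = Comp D (zbw W!(gs!j)) (gr!Suc(gs!j))"
    and Eg: "\<And>i. i < l \<Longrightarrow> i \<notin> set gs \<Longrightarrow> Comp D (zfw W!i) (gr!i) = Comp D (zbw W!i) (gr!Suc i)"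
    using Lg unfolding zloc_def lgs l by auto

  define G where "G k = Comp D (Comp D (gsg!k) (zfw Y!k)) (fr!k)" for k
  define G' where "G' k = Comp D (Comp D (gsg!k) (zbw Y!k)) (fr!Suc k)" for k

  have GG'': "G k = G' k" if "k < m" "k \<notin> set fs" for k
    unfolding G_def G'_def
    by (rule rw_right[OF D]) (use that in \<open>simp_all add: ty Ef\<close>)
  have GG': "G' k = G (Suc k)" if "Suc k < m" "gs ! k = gs ! Suc k" for k
    unfolding G_def G'_def using Ig[OF that] by simp
  have stp: "G k = G (Suc k)" if "Suc k < m" "gs ! k = gs ! Suc k" "hat fs k = hat fs (Suc k)" for k
  proof -
    have "k \<notin> set fs" using setf that by simp
    then show ?thesis using GG'' GG' that by simp
  qed
  have chain: "G k1 = G k2" if "k1 \<le> k2" "k2 < m" "gs ! k1 = gs ! k2" "hat fs k1 = hat fs k2" for k1 k2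
    using that(1)
  proof (induction k2 rule: dec_induct)
    case base then show ?case by simp
  next
    case (step k)
    have "gs ! k1 \<le> gs ! k" "gs ! k \<le> gs ! Suc k" "gs ! Suc k \<le> gs ! k2"
      using mong[of k1 k] mong[of k "Suc k"] mong[of "Suc k" k2] step that by auto
    moreover have "hat fs k1 \<le> hat fs k" "hat fs k \<le> hat fs (Suc k)" "hat fs (Suc k) \<le> hat fs k2"
      using hmf[of k1 k] hmf[of k "Suc k"] hmf[of "Suc k" k2] step by auto
    ultimately have "G k = G (Suc k)" using stp[of k] step that by auto
    then show ?case using step by simp
  qed

  have startG: "Comp D (zfw W ! i) (Comp D (gr ! i) (fr ! hat gs i)) = G (hat gs i)"
    if i: "i < l" "hat gs i < m" "gs ! hat gs i = i" for i
  proof -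
    define a where "a = hat gs i"
    have a: "a < m" "gs ! a = i" using i a_def by auto
    have "a = 0 \<or> gs ! (a - 1) < gs ! a"
    proof (cases "a = 0")
      case False
      have "\<not> hat gs i \<le> a - 1" using False a_def by simp
      then have "\<not> i \<le> gs ! (a - 1)" using galg[of "a - 1" i] a by simp
      then show ?thesis using a by simp
    qed simp
    then have e: "Comp D (gsg!a) (zfw Y!a) = Comp D (zfw W!i) (gr!i)" using Lg'[of a] a by simp
    have "Comp D (zfw W ! i) (Comp D (gr ! i) (fr ! a)) = Comp D (Comp D (zfw W ! i) (gr ! i)) (fr ! a)"
      using a i by (intro cat_assoc[OF D]) (simp_all add: ty a_def)
    also have "\<dots> = G a" unfolding G_def e ..
    finally show ?thesis unfolding a_def .
  qed
  have endG: "Comp D (zbw W ! i) (Comp D (gr ! Suc i) (fr ! hat gs (Suc i))) = G' (hat gs (Suc i) - 1)"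
    if i: "i < l" "0 < hat gs (Suc i)" "gs ! (hat gs (Suc i) - 1) = i" for i
  proof -
    define b where "b = hat gs (Suc i) - 1"
    have b: "b < m" "gs ! b = i" "Suc b = hat gs (Suc i)" using i b_def hatgs[of "Suc i"] by auto
    have "Suc b = m \<or> gs ! b < gs ! Suc b"
    proof (cases "Suc b = m")
      case False
      then have "Suc b < m" using b by simp
      then have "Suc i \<le> gs ! Suc b" using galg[of "Suc b" "Suc i"] b by simp
      then show ?thesis using b by simp
    qed simp
    then have e: "Comp D (gsg!b) (zbw Y!b) = Comp D (zbw W!i) (gr!Suc i)" using Rg[of b] b by simp
    have "Comp D (zbw W ! i) (Comp D (gr ! Suc i) (fr ! Suc b)) = Comp D (Comp D (zbw W ! i) (gr ! Suc i)) (fr ! Suc b)"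
      using b i by (intro cat_assoc[OF D]) (simp_all add: ty)
    also have "\<dots> = G' b" unfolding G'_def e ..
    finally show ?thesis unfolding b_def using b(3) b_def by simp
  qed

  have c1: "Comp D (Comp D (gsg!(fs!j)) (fsg!j)) (zbw X!j) = Comp D (Comp D (gsg!(fs!Suc j)) (fsg!Suc j)) (zfw X!Suc j)"
    if j: "Suc j < n" "gs!(fs!j) = gs!(fs!Suc j)" for j
  proof -
    have jn: "j < n" using j by simp
    have le: "fs!j \<le> fs!Suc j" using monf[of j "Suc j"] j by simp
    have b1: "fs!j < m" "fs!Suc j < m" using bfs j jn by auto
    show ?thesis
    proof (cases "fs!j = fs!Suc j")
      case True
      have "Comp D (Comp D (gsg!(fs!j)) (fsg!j)) (zbw X!j) = Comp D (Comp D (gsg!(fs!j)) (fsg!Suc j)) (zfw X!Suc j)"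
        by (rule rw_right[OF D]) (use j jn b1 True If[of j] in \<open>simp_all add: ty\<close>)
      then show ?thesis using True by simp
    next
      case False
      define k where "k = fs!j"
      define k' where "k' = fs!Suc j"
      have kk: "k < k'" "k' < m" using le False b1 k_def k'_def by auto
      have e1: "Comp D (fsg!j) (zbw X!j) = Comp D (zbw Y!k) (fr!Suc k)" using Rf[of j] jn kk k_def k'_def by simp
      have e2: "Comp D (fsg!Suc j) (zfw X!Suc j) = Comp D (zfw Y!k') (fr!k')" using Lf'[of "Suc j"] j kk k_def k'_def by simp
      have "Comp D (Comp D (gsg!k) (fsg!j)) (zbw X!j) = G' k"
        unfolding G'_def by (rule rw_right[OF D]) (use j jn kk k_def e1 in \<open>simp_all add: ty\<close>)
      also have "\<dots> = G (Suc k)"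
      proof (rule GG')
        show "Suc k < m" using kk by simp
        show "gs ! k = gs ! Suc k" using mong[of k "Suc k"] mong[of "Suc k" k'] kk j k_def k'_def by simp
      qed
      also have "\<dots> = G k'"
      proof (rule chain)
        show "gs ! Suc k = gs ! k'" using mong[of k "Suc k"] mong[of "Suc k" k'] kk j k_def k'_def by simp
        have "hat fs (Suc k) \<le> Suc j" "\<not> hat fs (Suc k) \<le> j" "hat fs k' \<le> Suc j" "\<not> hat fs k' \<le> j"
          using galf[of "Suc j"] galf[of j] j jn kk k_def k'_def by auto
        then show "hat fs (Suc k) = hat fs k'" by simp
      qed (use kk in auto)
      also have "\<dots> = Comp D (Comp D (gsg!k') (fsg!Suc j)) (zfw X!Suc j)"
        unfolding G_def by (rule rw_right[OF D, symmetric]) (use j jn kk k'_def e2 in \<open>simp_all add: ty\<close>)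
      finally show ?thesis unfolding k_def k'_def .
    qed
  qed

  have c2: "Comp D (Comp D (gsg!(fs!j)) (fsg!j)) (zfw X!j) = Comp D (zfw W!(gs!(fs!j))) (Comp D (gr!(gs!(fs!j))) (fr!hat gs (gs!(fs!j))))"
    if j: "j < n" "j = 0 \<or> gs!(fs!(j-1)) < gs!(fs!j)" for j
  proof -
    define k where "k = fs!j"
    define i where "i = gs!k"
    define a where "a = hat gs i"
    have k: "k < m" using bfs j k_def by simp
    have i: "i < l" using bgs k i_def by simp
    have fc: "j = 0 \<or> fs!(j-1) < fs!j"
    proof (cases "j = 0")
      case False
      show ?thesis
      proof (rule ccontr)
        assume "\<not> ?thesis"
        then have "fs!j \<le> fs!(j-1)" by simp
        then have "gs!(fs!j) \<le> gs!(fs!(j-1))" using mong bfs j by simp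
        then show False using j False by simp
      qed
    qed simp
    have e: "Comp D (fsg!j) (zfw X!j) = Comp D (zfw Y!k) (fr!k)" using Lf'[OF j(1) fc] k_def by simp
    have L: "Comp D (Comp D (gsg!k) (fsg!j)) (zfw X!j) = G k"
      unfolding G_def by (rule rw_right[OF D]) (use j k k_def e in \<open>simp_all add: ty\<close>)
    have ak: "a \<le> k" using galg[OF k, of i] a_def i_def by simp
    then have am: "a < m" using k by simp
    have ga: "gs ! a = i"
    proof -
      have "i \<le> gs ! a" using galg[OF am, of i] a_def by simp
      moreover have "gs ! a \<le> gs ! k" using mong ak k by simp
      ultimately show ?thesis using i_def by simp
    qed
    have R: "Comp D (zfw W!i) (Comp D (gr!i) (fr!a)) = G a"
      unfolding a_def by (rule startG) (use i am ga a_def in auto)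
    have "G a = G k"
    proof (rule chain[OF ak k])
      show "gs ! a = gs ! k" using ga i_def by simp
      have "hat fs k \<le> j" using galf[OF j(1), of k] k_def by simp
      moreover have "hat fs a \<le> hat fs k" using hmf ak by simp
      moreover have "j \<le> hat fs a"
      proof (cases "j = 0")
        case False
        have "\<not> a \<le> fs!(j-1)"
        proof
          assume "a \<le> fs!(j-1)"
          then have "i \<le> gs!(fs!(j-1))" using galg[of "fs!(j-1)" i] bfs j a_def by simp
          then show False using j False i_def k_def by simp
        qed
        then have "\<not> hat fs a \<le> j - 1" using galf[of "j-1" a] j by simp
        then show ?thesis by simp
      qed simp
      ultimately show "hat fs a = hat fs k" by simp
    qed
    then show ?thesis using L R unfolding i_def k_def a_def by simp
  qed

  have c3: "Comp D (Comp D (gsg!(fs!j)) (fsg!j)) (zbw X!j) = Comp D (zbw W!(gs!(fs!j))) (Comp D (gr!Suc (gs!(fs!j))) (fr!hat gs (Suc (gs!(fs!j)))))"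
    if j: "j < n" "Suc j = n \<or> gs!(fs!j) < gs!(fs!Suc j)" for j
  proof -
    define k where "k = fs!j"
    define i where "i = gs!k"
    define b where "b = hat gs (Suc i) - 1"
    have k: "k < m" using bfs j k_def by simp
    have i: "i < l" using bgs k i_def by simp
    have fc: "Suc j = n \<or> fs!j < fs!Suc j"
    proof (cases "Suc j = n")
      case False
      then have sj: "Suc j < n" using j by simp
      show ?thesis
      proof (rule ccontr)
        assume "\<not> ?thesis"
        then have "fs!Suc j \<le> fs!j" by simp
        then have "gs!(fs!Suc j) \<le> gs!(fs!j)" using mong bfs j by simp
        then show False using j False by simp
      qed
    qed simp
    have e: "Comp D (fsg!j) (zbw X!j) = Comp D (zbw Y!k) (fr!Suc k)" using Rf[OF j(1) fc] k_def by simp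
    have L: "Comp D (Comp D (gsg!k) (fsg!j)) (zbw X!j) = G' k"
      unfolding G'_def by (rule rw_right[OF D]) (use j k k_def e in \<open>simp_all add: ty\<close>)
    have kb': "\<not> hat gs (Suc i) \<le> k" using galg[OF k, of "Suc i"] i_def by simp
    have b: "k \<le> b" "b < m" "Suc b = hat gs (Suc i)" using kb' hatgs[of "Suc i"] b_def by auto
    have gb: "gs ! b = i"
    proof -
      have "i \<le> gs ! b" using mong[of k b] b i_def by simp
      moreover have "\<not> Suc i \<le> gs ! b" using galg[OF b(2), of "Suc i"] b by simp
      ultimately show ?thesis by simp
    qed
    have R: "Comp D (zbw W!i) (Comp D (gr!Suc i) (fr!hat gs (Suc i))) = G' b"
      unfolding b_def by (rule endG) (use i b gb b_def in auto)
    have "G' k = G' b"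
    proof (cases "k = b")
      case False
      then have kb: "k < b" using b by simp
      have "gs ! k \<le> gs ! Suc k" "gs ! Suc k \<le> gs ! b" using mong[of k "Suc k"] mong[of "Suc k" b] kb b by auto
      then have gsk: "gs ! Suc k = i" "gs ! k = i" using gb i_def by auto
      have h1: "\<not> hat fs (Suc k) \<le> j" using galf[OF j(1), of "Suc k"] k_def by simp
      have h2: "hat fs (Suc b) \<le> Suc j"
      proof (cases "Suc j = n")
        case True then show ?thesis using hatfs[of "Suc b"] by simp
      next
        case False
        then have sj: "Suc j < n" using j by simp
        then have "Suc i \<le> gs!(fs!Suc j)" using j False i_def k_def by simp
        then have "hat gs (Suc i) \<le> fs!Suc j" using galg[of "fs!Suc j" "Suc i"] bfs sj by simp
        then show ?thesis using galf[OF sj, of "Suc b"] b by simp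
      qed
      have "hat fs (Suc k) \<le> hat fs b" "hat fs b \<le> hat fs (Suc b)" using hmf kb by auto
      then have hh: "hat fs (Suc k) = hat fs b" "hat fs b = hat fs (Suc b)" using h1 h2 by auto
      have "G' k = G (Suc k)" using GG'[of k] kb b gsk by simp
      also have "\<dots> = G b" using chain[of "Suc k" b] kb b gsk gb hh by simp
      also have "\<dots> = G' b" using GG''[of b] b setf[of b] hh by simp
      finally show ?thesis .
    qed simp
    then show ?thesis using L R unfolding i_def k_def by simp
  qed
  have c4: "Comp D (zfw W!i) (Comp D (gr!i) (fr!hat gs i)) = Comp D (zbw W!i) (Comp D (gr!Suc i) (fr!hat gs (Suc i)))"
    if i: "i < l" "\<forall>j<n. gs!(fs!j) \<noteq> i" for i
  proof (cases "i \<in> set gs")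
    case False
    then have eqh: "hat gs (Suc i) = hat gs i" using setg[of i] hmg[of i "Suc i"] by simp
    have "Comp D (zfw W!i) (Comp D (gr!i) (fr!hat gs i)) = Comp D (Comp D (zfw W!i) (gr!i)) (fr!hat gs i)"
      using i by (intro cat_assoc[OF D]) (simp_all add: ty hatgs)
    also have "\<dots> = Comp D (Comp D (zbw W!i) (gr!Suc i)) (fr!hat gs i)" using Eg[OF i(1) False] by simp
    also have "\<dots> = Comp D (zbw W!i) (Comp D (gr!Suc i) (fr!hat gs (Suc i)))"
      unfolding eqh[symmetric] using i by (intro cat_assoc[OF D, symmetric]) (simp_all add: ty hatgs)
    finally show ?thesis .
  next
    case True
    define a where "a = hat gs i"
    define b where "b = hat gs (Suc i) - 1"
    have ab': "a < hat gs (Suc i)" using setg[of i] True a_def by simp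
    have b: "a \<le> b" "b < m" "Suc b = hat gs (Suc i)" using ab' hatgs[of "Suc i"] b_def by auto
    have am: "a < m" using b by simp
    have ga: "gs ! a = i"
    proof -
      have "i \<le> gs ! a" using galg[OF am, of i] a_def by simp
      moreover have "\<not> Suc i \<le> gs ! a" using galg[OF am, of "Suc i"] ab' by simp
      ultimately show ?thesis by simp
    qed
    have gb: "gs ! b = i"
    proof -
      have "i \<le> gs ! b" using galg[OF b(2), of i] a_def b by simp
      moreover have "\<not> Suc i \<le> gs ! b" using galg[OF b(2), of "Suc i"] b by simp
      ultimately show ?thesis by simp
    qed
    have L: "Comp D (zfw W!i) (Comp D (gr!i) (fr!a)) = G a"
      unfolding a_def by (rule startG) (use i am ga a_def in auto)
    have R: "Comp D (zbw W!i) (Comp D (gr!Suc i) (fr!hat gs (Suc i))) = G' b"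
      unfolding b_def by (rule endG) (use i b gb b_def in auto)
    have hh: "hat fs a = hat fs (Suc b)"
    proof (rule ccontr)
      assume "hat fs a \<noteq> hat fs (Suc b)"
      then have lt: "hat fs a < hat fs (Suc b)" using hmf[of a "Suc b"] b by simp
      define j0 where "j0 = hat fs a"
      have j0: "j0 < n" using lt hatfs[of "Suc b"] j0_def by simp
      have "a \<le> fs ! j0" using galf[OF j0, of a] j0_def by simp
      moreover have "\<not> Suc b \<le> fs ! j0" using galf[OF j0, of "Suc b"] lt j0_def by simp
      ultimately have "gs ! a \<le> gs ! (fs ! j0)" "gs ! (fs ! j0) \<le> gs ! b"
        using mong[of a "fs!j0"] mong[of "fs!j0" b] bfs[OF j0] b by auto
      then have "gs ! (fs ! j0) = i" using ga gb by simp
      then show False using i j0 by auto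
    qed
    have hh2: "hat fs a = hat fs b" "hat fs b = hat fs (Suc b)" using hmf[of a b] hmf[of b "Suc b"] hh b by auto
    have "G a = G b" using chain[of a b] b ga gb hh2 by simp
    also have "\<dots> = G' b" using GG''[of b] b setf[of b] hh2 by simp
    finally show ?thesis using L R unfolding a_def by simp
  qed
  show ?thesis unfolding zloc_def
    apply (intro conjI allI impI)
    subgoal for j using c1[of j] lfs by (simp add: nth_map del: upt_Suc)
    subgoal for j using c2[of j] lfs bfs[of j] bgs[of "fs!j"] by (simp add: nth_map del: upt_Suc)
    subgoal for j using c3[of j] lfs bfs[of j] bgs[of "fs!j"] by (cases "Suc j < n") (auto simp add: nth_map simp del: upt_Suc)
    subgoal for i using c4[of i] lfs l by (auto simp add: nth_map in_set_conv_nth simp del: upt_Suc)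
    done
qed


lemma zarr_regH: "is_zarr D f \<Longrightarrow> i \<le> zlen (acod f) \<Longrightarrow> areg f ! i \<in> Hom D"
  and zarr_regD: "is_zarr D f \<Longrightarrow> i \<le> zlen (acod f) \<Longrightarrow> Dom D (areg f ! i) = zreg (adom f) ! hat (amap f) i"
  and zarr_regC: "is_zarr D f \<Longrightarrow> i \<le> zlen (acod f) \<Longrightarrow> Cod D (areg f ! i) = zreg (acod f) ! i"
  and zarr_singH: "is_zarr D f \<Longrightarrow> j < zlen (adom f) \<Longrightarrow> asing f ! j \<in> Hom D"
  and zarr_singD: "is_zarr D f \<Longrightarrow> j < zlen (adom f) \<Longrightarrow> Dom D (asing f ! j) = zsing (adom f) ! j"
  and zarr_singC: "is_zarr D f \<Longrightarrow> j < zlen (adom f) \<Longrightarrow> Cod D (asing f ! j) = zsing (acod f) ! (amap f ! j)"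
  using zarr_facts(8,9)[of D f] by auto

lemma Z_comp_arr:
  assumes D: "category D" and f: "is_zarr D f" and g: "is_zarr D g" and fg: "acod f = adom g"
  shows "is_zarr D (zcomp D g f)"
proof -
  note F = zarr_facts[OF f] and G = zarr_facts[OF g]
  define X where "X = adom f"
  define Y where "Y = acod f"
  define W where "W = acod g"
  have gY: "adom g = Y" using fg Y_def by simp
  have fs: "delta_arr (zlen X) (zlen Y) (amap f)" using F X_def Y_def by simp
  have gs: "delta_arr (zlen Y) (zlen W) (amap g)" using G gY W_def by simp
  have hs: "delta_arr (zlen X) (zlen W) (delta_comp (amap g) (amap f))" by (rule delta_arr_comp[OF fs gs])
  have lr: "length (areg g) = Suc (zlen W)" using G W_def by simp
  have ls: "length (amap f) = zlen X" using F X_def by simp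
  have zc: "zcomp D g f = ZArr X W (delta_comp (amap g) (amap f))
     (map (\<lambda>i. Comp D (areg g ! i) (areg f ! hat (amap g) i)) [0..<Suc (zlen W)])
     (map (\<lambda>j. Comp D (asing g ! (amap f ! j)) (asing f ! j)) [0..<zlen X])"
    unfolding zcomp_def X_def W_def lr[unfolded W_def] ls[unfolded X_def] ..
  have hatg: "\<And>i. hat (amap g) i \<le> zlen Y" using hat_le[of "amap g"] G gY by simp
  have bf: "\<And>j. j < zlen X \<Longrightarrow> amap f ! j < zlen Y" using fs by (simp add: delta_arr_def)
  show ?thesis unfolding zc
  proof (rule is_zarrI)
    show "is_zobj D X" "is_zobj D W" using F G X_def W_def by auto
    show "delta_arr (zlen X) (zlen W) (delta_comp (amap g) (amap f))" by (rule hs)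
    show "length (map (\<lambda>i. Comp D (areg g ! i) (areg f ! hat (amap g) i)) [0..<Suc (zlen W)]) = Suc (zlen W)" by simp
    show "length (map (\<lambda>j. Comp D (asing g ! (amap f ! j)) (asing f ! j)) [0..<zlen X]) = zlen X" by simp
    show "\<forall>i\<le>zlen W. map (\<lambda>i. Comp D (areg g ! i) (areg f ! hat (amap g) i)) [0..<Suc (zlen W)] ! i \<in> Hom D \<and>
        Dom D (map (\<lambda>i. Comp D (areg g ! i) (areg f ! hat (amap g) i)) [0..<Suc (zlen W)] ! i) = zreg X ! hat (delta_comp (amap g) (amap f)) i \<and>
        Cod D (map (\<lambda>i. Comp D (areg g ! i) (areg f ! hat (amap g) i)) [0..<Suc (zlen W)] ! i) = zreg W ! i"
    proof (intro allI impI)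
      fix i assume i: "i \<le> zlen W"
      have h: "hat (amap g) i \<le> zlen (acod f)" using hatg Y_def by simp
      have iW: "i \<le> zlen (acod g)" using i W_def by simp
      have a1: "areg f ! hat (amap g) i \<in> Hom D" "Dom D (areg f ! hat (amap g) i) = zreg X ! hat (amap f) (hat (amap g) i)"
        "Cod D (areg f ! hat (amap g) i) = zreg Y ! hat (amap g) i"
        using zarr_regH[OF f h] zarr_regD[OF f h] zarr_regC[OF f h] X_def Y_def by auto
      have a2: "areg g ! i \<in> Hom D" "Dom D (areg g ! i) = zreg Y ! hat (amap g) i" "Cod D (areg g ! i) = zreg W ! i"
        using zarr_regH[OF g iW] zarr_regD[OF g iW] zarr_regC[OF g iW] gY W_def by auto
      have i': "i < Suc (zlen W)" using i by simp
      show "map (\<lambda>i. Comp D (areg g ! i) (areg f ! hat (amap g) i)) [0..<Suc (zlen W)] ! i \<in> Hom D \<and>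
        Dom D (map (\<lambda>i. Comp D (areg g ! i) (areg f ! hat (amap g) i)) [0..<Suc (zlen W)] ! i) = zreg X ! hat (delta_comp (amap g) (amap f)) i \<and>
        Cod D (map (\<lambda>i. Comp D (areg g ! i) (areg f ! hat (amap g) i)) [0..<Suc (zlen W)] ! i) = zreg W ! i"
        using a1 a2 D hat_comp[OF fs gs, of i] i' by (simp add: cat_comp_hom cat_comp_dom cat_comp_cod del: upt_Suc)
    qed
    show "\<forall>j<zlen X. map (\<lambda>j. Comp D (asing g ! (amap f ! j)) (asing f ! j)) [0..<zlen X] ! j \<in> Hom D \<and>
        Dom D (map (\<lambda>j. Comp D (asing g ! (amap f ! j)) (asing f ! j)) [0..<zlen X] ! j) = zsing X ! j \<and>
        Cod D (map (\<lambda>j. Comp D (asing g ! (amap f ! j)) (asing f ! j)) [0..<zlen X] ! j) = zsing W ! (delta_comp (amap g) (amap f) ! j)"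
    proof (intro allI impI)
      fix j assume j: "j < zlen X"
      have j1: "j < zlen (adom f)" using j X_def by simp
      have j2: "amap f ! j < zlen (adom g)" using bf[OF j] gY by simp
      show "map (\<lambda>j. Comp D (asing g ! (amap f ! j)) (asing f ! j)) [0..<zlen X] ! j \<in> Hom D \<and>
        Dom D (map (\<lambda>j. Comp D (asing g ! (amap f ! j)) (asing f ! j)) [0..<zlen X] ! j) = zsing X ! j \<and>
        Cod D (map (\<lambda>j. Comp D (asing g ! (amap f ! j)) (asing f ! j)) [0..<zlen X] ! j) = zsing W ! (delta_comp (amap g) (amap f) ! j)"
        using j zarr_singH[OF f j1] zarr_singD[OF f j1] zarr_singC[OF f j1]
          zarr_singH[OF g j2] zarr_singD[OF g j2] zarr_singC[OF g j2] D ls gY fg X_def W_def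
        by (simp add: cat_comp_hom cat_comp_dom cat_comp_cod)
    qed
    have srt: "sorted (delta_comp (amap g) (amap f))" "\<forall>j<length (delta_comp (amap g) (amap f)). delta_comp (amap g) (amap f) ! j < zlen W"
      using hs by (auto simp: delta_arr_def)
    show "\<forall>i<zlen W. zig_cond D X W (delta_comp (amap g) (amap f))
        (map (\<lambda>i. Comp D (areg g ! i) (areg f ! hat (amap g) i)) [0..<Suc (zlen W)])
        (map (\<lambda>j. Comp D (asing g ! (amap f ! j)) (asing f ! j)) [0..<zlen X]) i"
      unfolding zig_iff_loc[OF srt]
    proof (rule comp_loc[OF D _ _ _ refl refl refl fs gs])
      show "is_zobj D X" "is_zobj D Y" "is_zobj D W" using F G X_def Y_def W_def by auto
      show "\<forall>i\<le>zlen Y. areg f ! i \<in> Hom D \<and> Dom D (areg f ! i) = zreg X ! hat (amap f) i \<and> Cod D (areg f ! i) = zreg Y ! i"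
        using F X_def Y_def by simp
      show "\<forall>j<zlen X. asing f ! j \<in> Hom D \<and> Dom D (asing f ! j) = zsing X ! j \<and> Cod D (asing f ! j) = zsing Y ! (amap f ! j)"
        using F X_def Y_def by simp
      show "\<forall>i\<le>zlen W. areg g ! i \<in> Hom D \<and> Dom D (areg g ! i) = zreg Y ! hat (amap g) i \<and> Cod D (areg g ! i) = zreg W ! i"
        using G gY W_def by simp
      show "\<forall>j<zlen Y. asing g ! j \<in> Hom D \<and> Dom D (asing g ! j) = zsing Y ! j \<and> Cod D (asing g ! j) = zsing W ! (amap g ! j)"
        using G gY W_def by simp
      have "sorted (amap f)" "\<forall>j<length (amap f). amap f ! j < zlen Y" using fs by (auto simp: delta_arr_def)
      then show "zloc D X Y (amap f) (areg f) (asing f)"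
        using zig_iff_loc F X_def Y_def by blast
      have "sorted (amap g)" "\<forall>j<length (amap g). amap g ! j < zlen W" using gs by (auto simp: delta_arr_def)
      then show "zloc D Y W (amap g) (areg g) (asing g)"
        using zig_iff_loc G gY W_def by blast
    qed
  qed
qed


lemma Z_id_arr:
  assumes D: "category D" and X: "is_zobj D X"
  shows "is_zarr D (zid D X)"
proof -
  note zX = zobj_simps[OF X]
  have lr: "length (zreg X) = Suc (zlen X)" and lsg: "length (zsing X) = zlen X" using zX by (auto simp: zlen_def)
  have da: "delta_arr (zlen X) (zlen X) [0..<zlen X]" by (simp add: delta_arr_def)
  show ?thesis unfolding zid_def
  proof (rule is_zarrI[OF X X da])
    show "length (map (Ident D) (zreg X)) = Suc (zlen X)" "length (map (Ident D) (zsing X)) = zlen X"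
      using lr lsg by auto
    show "\<forall>i\<le>zlen X. map (Ident D) (zreg X) ! i \<in> Hom D \<and> Dom D (map (Ident D) (zreg X) ! i) = zreg X ! hat [0..<zlen X] i \<and>
        Cod D (map (Ident D) (zreg X) ! i) = zreg X ! i"
      using lr D zX by (auto simp: hat_id cat_id_hom cat_id_dom cat_id_cod)
    show "\<forall>j<zlen X. map (Ident D) (zsing X) ! j \<in> Hom D \<and> Dom D (map (Ident D) (zsing X) ! j) = zsing X ! j \<and>
        Cod D (map (Ident D) (zsing X) ! j) = zsing X ! ([0..<zlen X] ! j)"
      using lsg D zX by (auto simp: cat_id_hom cat_id_dom cat_id_cod)
    have "zloc D X X [0..<zlen X] (map (Ident D) (zreg X)) (map (Ident D) (zsing X))"
      unfolding zloc_def using lr lsg D zX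
      by (auto simp: cat_id_hom cat_id_dom cat_id_cod cat_id_left cat_id_right)
    then show "\<forall>i<zlen X. zig_cond D X X [0..<zlen X] (map (Ident D) (zreg X)) (map (Ident D) (zsing X)) i"
      by (subst zig_iff_loc) auto
  qed
qed

lemma Z_assoc:
  assumes D: "category D" and f: "is_zarr D f" and g: "is_zarr D g" and h: "is_zarr D h"
    and fg: "acod f = adom g" and gh: "acod g = adom h"
  shows "zcomp D h (zcomp D g f) = zcomp D (zcomp D h g) f"
proof -
  note F = zarr_facts[OF f] and G = zarr_facts[OF g] and H = zarr_facts[OF h]
  have fs: "delta_arr (zlen (adom f)) (zlen (adom g)) (amap f)" using F fg by simp
  have gs: "delta_arr (zlen (adom g)) (zlen (adom h)) (amap g)" using G gh by simp
  have hs: "delta_arr (zlen (adom h)) (zlen (acod h)) (amap h)" using H by simp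
  have e1: "delta_comp (amap h) (delta_comp (amap g) (amap f)) = delta_comp (delta_comp (amap h) (amap g)) (amap f)"
    using fs gs unfolding delta_arr_def by (intro nth_equalityI) auto
  have e2: "map (\<lambda>i. Comp D (areg h ! i) (map (\<lambda>i. Comp D (areg g ! i) (areg f ! hat (amap g) i)) [0..<length (areg g)] ! hat (amap h) i)) [0..<length (areg h)]
     = map (\<lambda>i. Comp D (map (\<lambda>i. Comp D (areg h ! i) (areg g ! hat (amap h) i)) [0..<length (areg h)] ! i) (areg f ! hat (delta_comp (amap h) (amap g)) i))
          [0..<length (map (\<lambda>i. Comp D (areg h ! i) (areg g ! hat (amap h) i)) [0..<length (areg h)])]"
  proof (rule nth_equalityI)
    fix i assume "i < length (map (\<lambda>i. Comp D (areg h ! i) (map (\<lambda>i. Comp D (areg g ! i) (areg f ! hat (amap g) i)) [0..<length (areg g)] ! hat (amap h) i)) [0..<length (areg h)])"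
    then have i: "i \<le> zlen (acod h)" using H by simp
    have h1: "hat (amap h) i \<le> zlen (acod g)" using hat_le[of "amap h" i] H gh by simp
    have h2: "hat (amap g) (hat (amap h) i) \<le> zlen (acod f)" using hat_le[of "amap g"] G fg by simp
    have hc: "hat (delta_comp (amap h) (amap g)) i = hat (amap g) (hat (amap h) i)" by (rule hat_comp[OF gs hs])
    have lg: "length (areg g) = Suc (zlen (acod g))" using G by simp
    have lh: "length (areg h) = Suc (zlen (acod h))" using H by simp
    show "map (\<lambda>i. Comp D (areg h ! i) (map (\<lambda>i. Comp D (areg g ! i) (areg f ! hat (amap g) i)) [0..<length (areg g)] ! hat (amap h) i)) [0..<length (areg h)] ! i
     = map (\<lambda>i. Comp D (map (\<lambda>i. Comp D (areg h ! i) (areg g ! hat (amap h) i)) [0..<length (areg h)] ! i) (areg f ! hat (delta_comp (amap h) (amap g)) i))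
          [0..<length (map (\<lambda>i. Comp D (areg h ! i) (areg g ! hat (amap h) i)) [0..<length (areg h)])] ! i"
      using i h1 h2 lg lh fg gh
      by (simp add: hc cat_assoc[OF D] zarr_regH[OF f] zarr_regD[OF f] zarr_regC[OF f]
          zarr_regH[OF g] zarr_regD[OF g] zarr_regC[OF g] zarr_regH[OF h] zarr_regD[OF h] zarr_regC[OF h] del: upt_Suc)
  qed simp
  have e3: "map (\<lambda>j. Comp D (asing h ! (delta_comp (amap g) (amap f) ! j)) (map (\<lambda>j. Comp D (asing g ! (amap f ! j)) (asing f ! j)) [0..<length (amap f)] ! j))
             [0..<length (delta_comp (amap g) (amap f))]
     = map (\<lambda>j. Comp D (map (\<lambda>j. Comp D (asing h ! (amap g ! j)) (asing g ! j)) [0..<length (amap g)] ! (amap f ! j)) (asing f ! j)) [0..<length (amap f)]"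
  proof (rule nth_equalityI)
    fix j assume "j < length (map (\<lambda>j. Comp D (asing h ! (delta_comp (amap g) (amap f) ! j)) (map (\<lambda>j. Comp D (asing g ! (amap f ! j)) (asing f ! j)) [0..<length (amap f)] ! j))
             [0..<length (delta_comp (amap g) (amap f))])"
    then have j: "j < zlen (adom f)" using F by simp
    have j1: "amap f ! j < zlen (adom g)" using fs j by (simp add: delta_arr_def)
    have j2: "amap g ! (amap f ! j) < zlen (adom h)" using gs j1 by (simp add: delta_arr_def)
    have lf: "length (amap f) = zlen (adom f)" "length (amap g) = zlen (adom g)" using F G by auto
    show "map (\<lambda>j. Comp D (asing h ! (delta_comp (amap g) (amap f) ! j)) (map (\<lambda>j. Comp D (asing g ! (amap f ! j)) (asing f ! j)) [0..<length (amap f)] ! j))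
             [0..<length (delta_comp (amap g) (amap f))] ! j
     = map (\<lambda>j. Comp D (map (\<lambda>j. Comp D (asing h ! (amap g ! j)) (asing g ! j)) [0..<length (amap g)] ! (amap f ! j)) (asing f ! j)) [0..<length (amap f)] ! j"
      using j j1 j2 lf fg gh
      by (simp add: cat_assoc[OF D] zarr_singH[OF f] zarr_singD[OF f] zarr_singC[OF f]
          zarr_singH[OF g] zarr_singD[OF g] zarr_singC[OF g] zarr_singH[OF h] zarr_singD[OF h] zarr_singC[OF h])
  qed simp
  show ?thesis unfolding zcomp_def using e1 e2 e3 by simp
qed

lemma Z_id_right:
  assumes D: "category D" and f: "is_zarr D f"
  shows "zcomp D f (zid D (adom f)) = f"
proof -
  note F = zarr_facts[OF f]
  have lr: "length (zreg (adom f)) = Suc (zlen (adom f))" using zobj_lens(1)[OF F(2)] .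
  have e1: "delta_comp (amap f) [0..<zlen (adom f)] = amap f"
    using F by (intro nth_equalityI) auto
  have e2: "map (\<lambda>i. Comp D (areg f ! i) (map (Ident D) (zreg (adom f)) ! hat (amap f) i)) [0..<length (areg f)] = areg f"
  proof (rule nth_equalityI)
    fix i assume "i < length (map (\<lambda>i. Comp D (areg f ! i) (map (Ident D) (zreg (adom f)) ! hat (amap f) i)) [0..<length (areg f)])"
    then have i: "i \<le> zlen (acod f)" using F by simp
    have "hat (amap f) i \<le> zlen (adom f)" using hat_le[of "amap f" i] F by simp
    then show "map (\<lambda>i. Comp D (areg f ! i) (map (Ident D) (zreg (adom f)) ! hat (amap f) i)) [0..<length (areg f)] ! i = areg f ! i"
      using i lr F(5) D by (simp add: cat_id_right zarr_regH[OF f] zarr_regD[OF f] del: upt_Suc)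
  qed simp
  have e3: "map (\<lambda>j. Comp D (asing f ! ([0..<zlen (adom f)] ! j)) (map (Ident D) (zsing (adom f)) ! j)) [0..<length [0..<zlen (adom f)]] = asing f"
    using F D by (intro nth_equalityI) (auto simp: zlen_def cat_id_right zarr_singH[OF f] zarr_singD[OF f])
  show ?thesis unfolding zcomp_def zid_def using e1 e2 e3 F(1) by simp
qed

lemma Z_id_left:
  assumes D: "category D" and f: "is_zarr D f"
  shows "zcomp D (zid D (acod f)) f = f"
proof -
  note F = zarr_facts[OF f]
  have lr: "length (zreg (acod f)) = Suc (zlen (acod f))" using zobj_lens(1)[OF F(3)] .
  have e1: "delta_comp [0..<zlen (acod f)] (amap f) = amap f"
    using F by (intro nth_equalityI) (auto simp: delta_arr_def)
  have e2: "map (\<lambda>i. Comp D (map (Ident D) (zreg (acod f)) ! i) (areg f ! hat [0..<zlen (acod f)] i)) [0..<length (map (Ident D) (zreg (acod f)))] = areg f"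
  proof (rule nth_equalityI)
    fix i assume "i < length (map (\<lambda>i. Comp D (map (Ident D) (zreg (acod f)) ! i) (areg f ! hat [0..<zlen (acod f)] i)) [0..<length (map (Ident D) (zreg (acod f)))])"
    then have i: "i \<le> zlen (acod f)" using lr by simp
    then show "map (\<lambda>i. Comp D (map (Ident D) (zreg (acod f)) ! i) (areg f ! hat [0..<zlen (acod f)] i)) [0..<length (map (Ident D) (zreg (acod f)))] ! i = areg f ! i"
      using lr D by (simp add: hat_id cat_id_left zarr_regH[OF f] zarr_regC[OF f] del: upt_Suc)
  qed (use lr F in simp)
  have e3: "map (\<lambda>j. Comp D (map (Ident D) (zsing (acod f)) ! (amap f ! j)) (asing f ! j)) [0..<length (amap f)] = asing f"
  proof (rule nth_equalityI)
    fix j assume "j < length (map (\<lambda>j. Comp D (map (Ident D) (zsing (acod f)) ! (amap f ! j)) (asing f ! j)) [0..<length (amap f)])"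
    then have j: "j < zlen (adom f)" using F by simp
    then have "amap f ! j < length (zsing (acod f))" using F by (simp add: delta_arr_def zlen_def)
    then show "map (\<lambda>j. Comp D (map (Ident D) (zsing (acod f)) ! (amap f ! j)) (asing f ! j)) [0..<length (amap f)] ! j = asing f ! j"
      using j F D by (simp add: cat_id_left zarr_singH[OF f] zarr_singC[OF f])
  qed (use F in simp)
  show ?thesis unfolding zcomp_def zid_def using e1 e2 e3 F(1) by simp
qed

lemma Z_category: assumes D: "category D" shows "category (Z D)"
  unfolding category_def Z_def
  using zarr_facts(2,3) Z_id_arr[OF D] Z_comp_arr[OF D] Z_assoc[OF D] Z_id_left[OF D] Z_id_right[OF D]
  by (auto simp: zid_def zcomp_def)

lemma lift_category: assumes "category C" shows "category (lift C)"
  using assms unfolding category_def lift_def by (auto simp: image_iff) 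



lemma Zit_Suc: "Zit (Suc k) C = Z (Zit k C)"
  unfolding Zit_def by simp

lemma Zit_cat: "category C \<Longrightarrow> category (Zit n C)"
  by (induction n) (simp_all add: Zit_Suc Z_category lift_category, simp add: Zit_def lift_category)

lemma Z_simps[simp]: "Hom (Z D) = {f. is_zarr D f}" "Ob (Z D) = {X. is_zobj D X}" "Dom (Z D) = adom" "Cod (Z D) = acod"
  "Comp (Z D) = zcomp D" "Ident (Z D) = zid D"
  by (simp_all add: Z_def)

lemma zcomp_parts:
  assumes "zcomp D g f = zcomp D g f'"
  shows "delta_comp (amap g) (amap f) = delta_comp (amap g) (amap f')"
    "map (\<lambda>i. Comp D (areg g ! i) (areg f ! hat (amap g) i)) [0..<length (areg g)]
   = map (\<lambda>i. Comp D (areg g ! i) (areg f' ! hat (amap g) i)) [0..<length (areg g)]"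
    "map (\<lambda>j. Comp D (asing g ! (amap f ! j)) (asing f ! j)) [0..<length (amap f)]
   = map (\<lambda>j. Comp D (asing g ! (amap f' ! j)) (asing f' ! j)) [0..<length (amap f')]"
  using assms unfolding zcomp_def by simp_all

lemma par_monic:
  assumes D: "category D" and fp: "f \<in> parallel_degen D S" and S: "\<forall>s\<in>S. monic D s"
  shows "monic (Z D) f"
proof -
  have f: "is_zarr D f" and vf: "vertical f" and sr: "set (areg f) \<subseteq> S" and ss: "set (asing f) \<subseteq> S"
    using fp unfolding parallel_degen_def by auto
  note F = zarr_facts[OF f]
  define n where "n = zlen (adom f)"
  have nc: "zlen (acod f) = n" and af: "amap f = [0..<n]" using vf unfolding vertical_def n_def by auto
  show ?thesis unfolding monic_def Z_simps
  proof (intro conjI allI impI)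
    show "f \<in> {f. is_zarr D f}" using f by simp
    fix a b assume "a \<in> {f. is_zarr D f}" "b \<in> {f. is_zarr D f}" and ab: "adom a = adom b" "acod a = adom f" "acod b = adom f"
      "zcomp D f a = zcomp D f b"
    then have a: "is_zarr D a" and b: "is_zarr D b" by auto
    note A = zarr_facts[OF a] and B = zarr_facts[OF b]
    note P = zcomp_parts[OF ab(4)]
    have ca: "zlen (acod a) = n" "zlen (acod b) = n" using ab n_def by auto
    have ida: "delta_comp (amap f) (amap a) = amap a"
      using A ca unfolding af by (intro nth_equalityI) (auto simp: delta_arr_def)
    have idb: "delta_comp (amap f) (amap b) = amap b"
      using B ca unfolding af by (intro nth_equalityI) (auto simp: delta_arr_def)
    have am: "amap a = amap b" using P(1) ida idb by simp
    have la: "length (amap a) = zlen (adom a)" "length (amap b) = zlen (adom a)" using A B ab by auto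
    have sg: "asing a = asing b"
    proof (rule nth_equalityI)
      show "length (asing a) = length (asing b)" using A B ab by simp
      fix j assume "j < length (asing a)"
      then have j: "j < zlen (adom a)" "j < zlen (adom b)" using A ab by auto
      have e: "Comp D (asing f ! (amap a ! j)) (asing a ! j) = Comp D (asing f ! (amap a ! j)) (asing b ! j)"
        using arg_cong[OF P(3), of "\<lambda>xs. xs ! j"] j la am by simp
      have aj: "amap a ! j < n" using A j ca by (simp add: delta_arr_def)
      then have "asing f ! (amap a ! j) \<in> set (asing f)" using F n_def by simp
      then have mo: "monic D (asing f ! (amap a ! j))" using S ss by auto
      show "asing a ! j = asing b ! j"
        using mo[unfolded monic_def] e j aj am ab
          zarr_singH[OF a j(1)] zarr_singD[OF a j(1)] zarr_singC[OF a j(1)]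
          zarr_singH[OF b j(2)] zarr_singD[OF b j(2)] zarr_singC[OF b j(2)] zarr_singD[OF f, of "amap a ! j"] n_def
        by auto
    qed
    have rg: "areg a = areg b"
    proof (rule nth_equalityI)
      show "length (areg a) = length (areg b)" using A B ca by simp
      fix i assume "i < length (areg a)"
      then have i: "i \<le> zlen (acod a)" "i \<le> zlen (acod b)" "i \<le> zlen (acod f)" using A ca nc by auto
      have lr: "length (areg f) = Suc n" using F nc by simp
      have e: "Comp D (areg f ! i) (areg a ! i) = Comp D (areg f ! i) (areg b ! i)"
      proof -
        have "i < Suc n" "i \<le> n" using i nc by auto
        then show ?thesis using arg_cong[OF P(2), of "\<lambda>xs. xs ! i"] lr unfolding af by (simp add: hat_id del: upt_Suc)
      qed
      have "areg f ! i \<in> set (areg f)" using i lr nc by simp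
      then have mo: "monic D (areg f ! i)" using S sr by auto
      show "areg a ! i = areg b ! i"
        using mo[unfolded monic_def] e i am ab
          zarr_regH[OF a i(1)] zarr_regD[OF a i(1)] zarr_regC[OF a i(1)]
          zarr_regH[OF b i(2)] zarr_regD[OF b i(2)] zarr_regC[OF b i(2)] zarr_regD[OF f i(3)] af hat_id[of i n] nc
        by auto
    qed
    show "a = b" using A(1) B(1) ab am sg rg by (metis)
  qed
qed


lemma simple_split:
  assumes D: "category D" and fsd: "f \<in> simple_degen D"
  shows "(\<forall>k\<le>zlen (adom f). \<exists>i\<le>zlen (acod f). hat (amap f) i = k) \<and>
    (\<exists>v. is_zarr D v \<and> adom v = acod f \<and> zlen (acod v) = zlen (acod f) \<and> amap v = [0..<zlen (acod f)] \<and>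
     (\<forall>j<zlen (adom f). Comp D (asing v ! (amap f ! j)) (asing f ! j) = Ident D (zsing (adom f) ! j)) \<and>
     (\<forall>i\<le>zlen (acod f). Comp D (areg v ! i) (areg f ! i) = Ident D (zreg (adom f) ! hat (amap f) i)))"
proof -
  have cc: "cocartesian D f" and dm: "delta_mono (zlen (adom f)) (zlen (acod f)) (amap f)"
    using fsd unfolding simple_degen_def by auto
  have f: "is_zarr D f" using cc unfolding cocartesian_def by simp
  note F = zarr_facts[OF f]
  define X where "X = adom f"
  define n where "n = zlen X"
  define m where "m = zlen (acod f)"
  define \<delta> where "\<delta> = amap f"
  have X: "is_zobj D X" using F X_def by simp
  note zX = zobj_simps[OF X, unfolded n_def[symmetric]]
  have da: "delta_arr n m \<delta>" using F X_def n_def m_def \<delta>_def by simp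
  have ld: "length \<delta> = n" and sd: "sorted \<delta>" and bd: "\<And>j. j < n \<Longrightarrow> \<delta> ! j < m"
    using da by (auto simp: delta_arr_def)
  have inj: "p = q" if "p < n" "q < n" "\<delta> ! p = \<delta> ! q" for p q
  proof -
    have "delta_arr 1 n [p]" "delta_arr 1 n [q]" using that by (auto simp: delta_arr_def)
    moreover have "delta_comp \<delta> [p] = delta_comp \<delta> [q]" using that by (simp add: delta_comp_def)
    ultimately have "[p] = [q]" using dm unfolding delta_mono_def X_def n_def \<delta>_def by blast
    then show ?thesis by simp
  qed
  have smono: "\<delta> ! p < \<delta> ! q" if "p < q" "q < n" for p q
  proof -
    have "\<delta> ! p \<le> \<delta> ! q" using sorted_mono_nth[OF sd, of p q] that ld by simp
    moreover have "\<delta> ! p \<noteq> \<delta> ! q" using inj[of p q] that by auto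
    ultimately show ?thesis by simp
  qed
  have smono': "(\<delta> ! p \<le> \<delta> ! q) = (p \<le> q)" if "p < n" "q < n" for p q
    using smono[of p q] smono[of q p] that by (cases "p \<le> q") (auto simp: le_less)
  have hat_at: "hat \<delta> (\<delta> ! p) = p" if "p < n" for p
    by (rule hat_unique[OF sd]) (use that ld smono' in auto)
  have hat_at2: "hat \<delta> (Suc (\<delta> ! p)) = Suc p" if "p < n" for p
  proof (rule hat_unique[OF sd])
    show "Suc p \<le> length \<delta>" using that ld by simp
    show "\<forall>k<length \<delta>. (Suc p \<le> k) = (Suc (\<delta> ! p) \<le> \<delta> ! k)"
    proof (intro allI impI)
      fix k assume k: "k < length \<delta>"
      have "(\<delta> ! k \<le> \<delta> ! p) = (k \<le> p)" using smono'[of k p] that k ld by simp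
      then have "(p < k) = (\<delta> ! p < \<delta> ! k)" by (metis not_le)
      then show "(Suc p \<le> k) = (Suc (\<delta> ! p) \<le> \<delta> ! k)" by (simp add: Suc_le_eq)
    qed
  qed
  have hat_n: "\<And>i. hat \<delta> i \<le> n" using hat_le[of \<delta>] ld by simp
  have hat_m: "hat \<delta> m = n" using hat_top[OF da] .
  have notin: "hat \<delta> (Suc i) = hat \<delta> i" if "i \<notin> set \<delta>" for i
    using in_set_hat[OF sd, of i] hat_mono[OF sd, of i "Suc i"] that by simp
  have isin: "hat \<delta> i < n \<and> \<delta> ! hat \<delta> i = i \<and> hat \<delta> (Suc i) = Suc (hat \<delta> i)" if iin: "i \<in> set \<delta>" for i
  proof -
    obtain p where p0: "p < length \<delta>" "\<delta> ! p = i" using iin by (auto simp: in_set_conv_nth)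
    then have p: "p < n" "\<delta> ! p = i" using ld by auto
    then show ?thesis using hat_at[OF p(1)] hat_at2[OF p(1)] by simp
  qed
  define rs where "rs = map (\<lambda>i. zreg X ! hat \<delta> i) [0..<Suc m]"
  define ss where "ss = map (\<lambda>i. if i \<in> set \<delta> then zsing X ! hat \<delta> i else zreg X ! hat \<delta> i) [0..<m]"
  define xs where "xs = map (\<lambda>i. if i \<in> set \<delta> then zfw X ! hat \<delta> i else Ident D (zreg X ! hat \<delta> i)) [0..<m]"
  define xs' where "xs' = map (\<lambda>i. if i \<in> set \<delta> then zbw X ! hat \<delta> i else Ident D (zreg X ! hat \<delta> i)) [0..<m]"
  define Y0 where "Y0 = ZObj rs ss xs xs'"
  have lY: "zlen Y0 = m" unfolding Y0_def zlen_def ss_def by simp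
  have Y0: "is_zobj D Y0" unfolding Y0_def
  proof (rule is_zobjI)
    show "length rs = Suc (length ss)" "length xs = length ss" "length xs' = length ss"
      by (simp_all add: rs_def ss_def xs_def xs'_def)
    show "rs ! i \<in> Ob D" if "i \<le> length ss" for i
      using that hat_n[of i] zX by (simp add: rs_def ss_def del: upt_Suc)
    show "ss ! i \<in> Ob D" if "i < length ss" for i
      using that hat_n[of i] zX isin[of i] by (simp add: ss_def)
    show "xs ! i \<in> Hom D \<and> Dom D (xs ! i) = rs ! i \<and> Cod D (xs ! i) = ss ! i" if "i < length ss" for i
      using that hat_n[of i] zX isin[of i] D by (simp add: ss_def xs_def rs_def cat_id_hom cat_id_dom cat_id_cod del: upt_Suc)
    show "xs' ! i \<in> Hom D \<and> Dom D (xs' ! i) = rs ! Suc i \<and> Cod D (xs' ! i) = ss ! i" if "i < length ss" for i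
      using that hat_n[of i] zX isin[of i] notin[of i] D by (simp add: ss_def xs'_def rs_def cat_id_hom cat_id_dom cat_id_cod del: upt_Suc)
  qed
  define hr where "hr = map (\<lambda>i. Ident D (zreg X ! hat \<delta> i)) [0..<Suc m]"
  define hsg where "hsg = map (\<lambda>j. Ident D (zsing X ! j)) [0..<n]"
  define h where "h = ZArr X Y0 \<delta> hr hsg"
  have h: "is_zarr D h" unfolding h_def
  proof (rule is_zarrI[OF X Y0])
    show "delta_arr (zlen X) (zlen Y0) \<delta>" using da lY n_def by simp
    show "length hr = Suc (zlen Y0)" "length hsg = zlen X" using lY n_def by (simp_all add: hr_def hsg_def)
    show "\<forall>i\<le>zlen Y0. hr ! i \<in> Hom D \<and> Dom D (hr ! i) = zreg X ! hat \<delta> i \<and> Cod D (hr ! i) = zreg Y0 ! i"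
      using lY hat_n zX D by (auto simp: hr_def Y0_def rs_def cat_id_hom cat_id_dom cat_id_cod simp del: upt_Suc)
    show "\<forall>j<zlen X. hsg ! j \<in> Hom D \<and> Dom D (hsg ! j) = zsing X ! j \<and> Cod D (hsg ! j) = zsing Y0 ! (\<delta> ! j)"
      using zX D bd hat_at ld by (auto simp: hsg_def Y0_def ss_def n_def[symmetric] cat_id_hom cat_id_dom cat_id_cod)
    have "zloc D X Y0 \<delta> hr hsg" unfolding zloc_def
    proof (intro conjI allI impI)
      fix j assume "Suc j < length \<delta>" "\<delta> ! j = \<delta> ! Suc j"
      then show "Comp D (hsg ! j) (zbw X ! j) = Comp D (hsg ! Suc j) (zfw X ! Suc j)" using inj[of j "Suc j"] ld by simp
    next
      fix j assume j: "j < length \<delta>"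
      then have j': "j < n" "\<delta> ! j < m" "\<delta> ! j \<in> set \<delta>" using ld bd by auto
      show "Comp D (hsg ! j) (zfw X ! j) = Comp D (zfw Y0 ! (\<delta> ! j)) (hr ! (\<delta> ! j))"
        using j' hat_at[OF j'(1)] zX D
        by (simp add: hsg_def hr_def Y0_def xs_def cat_id_left cat_id_right del: upt_Suc)
    next
      fix j assume j: "j < length \<delta>"
      then have j': "j < n" "\<delta> ! j < m" "\<delta> ! j \<in> set \<delta>" using ld bd by auto
      show "Comp D (hsg ! j) (zbw X ! j) = Comp D (zbw Y0 ! (\<delta> ! j)) (hr ! Suc (\<delta> ! j))"
        using j' hat_at[OF j'(1)] hat_at2[OF j'(1)] zX D
        by (simp add: hsg_def hr_def Y0_def xs'_def cat_id_left cat_id_right del: upt_Suc)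
    next
      fix i assume i: "i < zlen Y0" "i \<notin> set \<delta>"
      show "Comp D (zfw Y0 ! i) (hr ! i) = Comp D (zbw Y0 ! i) (hr ! Suc i)"
        using i lY notin[OF i(2)] by (simp add: hr_def Y0_def xs_def xs'_def del: upt_Suc)
    qed
    then show "\<forall>i<zlen Y0. zig_cond D X Y0 \<delta> hr hsg i" using zig_iff_loc[of \<delta> Y0] sd bd ld lY by simp
  qed
  have u: "delta_arr (zlen (acod f)) (zlen (acod h)) [0..<zlen (acod f)]" using lY m_def by (simp add: h_def delta_arr_def)
  have uc: "delta_comp [0..<zlen (acod f)] (amap f) = amap h"
    using bd ld unfolding h_def \<delta>_def[symmetric] m_def[symmetric] by (intro nth_equalityI) auto
  have ex: "\<exists>!v. v \<in> Hom (Z D) \<and> adom v = acod f \<and> acod v = acod h \<and> zcomp D v f = h \<and> amap v = [0..<zlen (acod f)]"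
  proof -
    have "\<forall>h u. h \<in> Hom (Z D) \<longrightarrow> adom h = adom f \<longrightarrow>
        delta_arr (zlen (acod f)) (zlen (acod h)) u \<longrightarrow> delta_comp u (amap f) = amap h \<longrightarrow>
        (\<exists>!v. v \<in> Hom (Z D) \<and> adom v = acod f \<and> acod v = acod h \<and> zcomp D v f = h \<and> amap v = u)"
      using cc unfolding cocartesian_def by blast
    then have "h \<in> Hom (Z D) \<longrightarrow> adom h = adom f \<longrightarrow>
        delta_arr (zlen (acod f)) (zlen (acod h)) [0..<zlen (acod f)] \<longrightarrow> delta_comp [0..<zlen (acod f)] (amap f) = amap h \<longrightarrow>
        (\<exists>!v. v \<in> Hom (Z D) \<and> adom v = acod f \<and> acod v = acod h \<and> zcomp D v f = h \<and> amap v = [0..<zlen (acod f)])"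
      by blast
    moreover have "h \<in> Hom (Z D)" "adom h = adom f" using h X_def by (simp_all add: h_def)
    ultimately show ?thesis using u uc by blast
  qed
  then obtain v where v0: "v \<in> Hom (Z D)" "adom v = acod f" "acod v = acod h" "zcomp D v f = h" "amap v = [0..<zlen (acod f)]"
    by (elim ex1E) blast
  then have v: "is_zarr D v" "adom v = acod f" "acod v = acod h" "zcomp D v f = h" "amap v = [0..<zlen (acod f)]" by auto
  note V = zarr_facts[OF v(1)]
  have P1: "map (\<lambda>i. Comp D (areg v ! i) (areg f ! hat (amap v) i)) [0..<length (areg v)] = hr"
    and P2: "map (\<lambda>j. Comp D (asing v ! (amap f ! j)) (asing f ! j)) [0..<length (amap f)] = hsg"
    using v(4) unfolding zcomp_def h_def by simp_all
  have surj: "\<forall>k\<le>zlen (adom f). \<exists>i\<le>zlen (acod f). hat (amap f) i = k"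
  proof (intro allI impI)
    fix k assume k: "k \<le> zlen (adom f)"
    show "\<exists>i\<le>zlen (acod f). hat (amap f) i = k"
    proof (cases "k < n")
      case True then show ?thesis using hat_at[OF True] bd[OF True] m_def \<delta>_def by (intro exI[of _ "\<delta> ! k"]) auto
    next
      case False then show ?thesis using hat_m k m_def \<delta>_def n_def X_def by (intro exI[of _ m]) auto
    qed
  qed
  show ?thesis
  proof (intro conjI[OF surj] exI conjI allI impI)
    show "is_zarr D v" "adom v = acod f" "amap v = [0..<zlen (acod f)]" using v by auto
    show "zlen (acod v) = zlen (acod f)" using v lY m_def by (simp add: h_def)
    fix j assume j: "j < zlen (adom f)"
    then show "Comp D (asing v ! (amap f ! j)) (asing f ! j) = Ident D (zsing (adom f) ! j)"
      using arg_cong[OF P2, of "\<lambda>xs. xs ! j"] F X_def n_def by (simp add: hsg_def)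
  next
    fix i assume i: "i \<le> zlen (acod f)"
    have lv: "length (areg v) = Suc m" using V v lY m_def by (simp add: h_def)
    have "i < Suc m" using i m_def by simp
    then show "Comp D (areg v ! i) (areg f ! i) = Ident D (zreg (adom f) ! hat (amap f) i)"
      using arg_cong[OF P1, of "\<lambda>xs. xs ! i"] lv v(5) i m_def X_def \<delta>_def
      by (simp add: hr_def hat_id del: upt_Suc)
  qed
qed


lemma simple_monic:
  assumes D: "category D" and fsd: "f \<in> simple_degen D"
  shows "monic (Z D) f"
proof -
  have cc: "cocartesian D f" and dm: "delta_mono (zlen (adom f)) (zlen (acod f)) (amap f)"
    using fsd unfolding simple_degen_def by auto
  have f: "is_zarr D f" using cc unfolding cocartesian_def by simp
  note F = zarr_facts[OF f]
  note SP = simple_split[OF D fsd]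
  have surj: "\<forall>k\<le>zlen (adom f). \<exists>i\<le>zlen (acod f). hat (amap f) i = k" using SP by blast
  obtain v where v: "is_zarr D v" "adom v = acod f" "zlen (acod v) = zlen (acod f)" "amap v = [0..<zlen (acod f)]"
    "\<forall>j<zlen (adom f). Comp D (asing v ! (amap f ! j)) (asing f ! j) = Ident D (zsing (adom f) ! j)"
    "\<forall>i\<le>zlen (acod f). Comp D (areg v ! i) (areg f ! i) = Ident D (zreg (adom f) ! hat (amap f) i)"
    using SP by blast
  define n where "n = zlen (adom f)"
  define m where "m = zlen (acod f)"
  show ?thesis unfolding monic_def Z_simps
  proof (intro conjI allI impI)
    show "f \<in> {f. is_zarr D f}" using f by simp
    fix a b assume "a \<in> {f. is_zarr D f}" "b \<in> {f. is_zarr D f}" and ab: "adom a = adom b" "acod a = adom f" "acod b = adom f"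
      "zcomp D f a = zcomp D f b"
    then have a: "is_zarr D a" and b: "is_zarr D b" by auto
    note A = zarr_facts[OF a] and B = zarr_facts[OF b]
    note P = zcomp_parts[OF ab(4)]
    have am: "amap a = amap b"
    proof -
      have "delta_arr (zlen (adom a)) n (amap a)" "delta_arr (zlen (adom a)) n (amap b)" using A B ab n_def by auto
      then show ?thesis using dm P(1) unfolding delta_mono_def n_def by blast
    qed
    have la: "length (amap a) = zlen (adom a)" "length (amap b) = zlen (adom a)" using A B ab by auto
    have sg: "asing a = asing b"
    proof (rule nth_equalityI)
      show "length (asing a) = length (asing b)" using A B ab by simp
      fix j assume "j < length (asing a)"
      then have j: "j < zlen (adom a)" "j < zlen (adom b)" using A ab by auto
      have e: "Comp D (asing f ! (amap a ! j)) (asing a ! j) = Comp D (asing f ! (amap a ! j)) (asing b ! j)"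
        using arg_cong[OF P(3), of "\<lambda>xs. xs ! j"] j la am by simp
      have aj: "amap a ! j < n" using A j ab n_def by (simp add: delta_arr_def)
      have fj: "amap f ! (amap a ! j) < m" using F aj n_def m_def by (simp add: delta_arr_def)
      have fj': "amap f ! (amap a ! j) < zlen (adom v)" using fj v m_def by simp
      show "asing a ! j = asing b ! j"
      proof (rule split_mono_cancel[OF D])
        show "asing f ! (amap a ! j) \<in> Hom D" using zarr_singH[OF f] aj n_def by simp
        show "asing v ! (amap f ! (amap a ! j)) \<in> Hom D" using zarr_singH[OF v(1) fj'] .
        show "Cod D (asing f ! (amap a ! j)) = Dom D (asing v ! (amap f ! (amap a ! j)))"
          using zarr_singC[OF f] zarr_singD[OF v(1) fj'] aj n_def v(2) by simp
        show "Comp D (asing v ! (amap f ! (amap a ! j))) (asing f ! (amap a ! j)) = Ident D (Dom D (asing f ! (amap a ! j)))"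
          using v(5) zarr_singD[OF f] aj n_def by simp
        show "asing a ! j \<in> Hom D" "asing b ! j \<in> Hom D" using zarr_singH[OF a j(1)] zarr_singH[OF b j(2)] by auto
        show "Cod D (asing a ! j) = Dom D (asing f ! (amap a ! j))" "Cod D (asing b ! j) = Dom D (asing f ! (amap a ! j))"
          using zarr_singC[OF a j(1)] zarr_singC[OF b j(2)] zarr_singD[OF f] aj n_def ab am by auto
      qed (rule e)
    qed
    have rg: "areg a = areg b"
    proof (rule nth_equalityI)
      show "length (areg a) = length (areg b)" using A B ab by simp
      fix k assume "k < length (areg a)"
      then have k: "k \<le> zlen (acod a)" "k \<le> zlen (acod b)" "k \<le> n" using A ab n_def by auto
      obtain i where i: "i \<le> m" "hat (amap f) i = k" using surj k m_def n_def by blast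
      have lr: "length (areg f) = Suc m" using F m_def by simp
      have e: "Comp D (areg f ! i) (areg a ! k) = Comp D (areg f ! i) (areg b ! k)"
      proof -
        have "i < Suc m" using i by simp
        then show ?thesis using arg_cong[OF P(2), of "\<lambda>xs. xs ! i"] lr i by (simp del: upt_Suc)
      qed
      have im: "i \<le> zlen (acod f)" "i \<le> zlen (acod v)" using i m_def v(3) by auto
      show "areg a ! k = areg b ! k"
      proof (rule split_mono_cancel[OF D])
        show "areg f ! i \<in> Hom D" using zarr_regH[OF f im(1)] .
        show "areg v ! i \<in> Hom D" using zarr_regH[OF v(1) im(2)] .
        show "Cod D (areg f ! i) = Dom D (areg v ! i)"
          using zarr_regC[OF f im(1)] zarr_regD[OF v(1) im(2)] v(2,4) hat_id[OF im(1)] by simp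
        show "Comp D (areg v ! i) (areg f ! i) = Ident D (Dom D (areg f ! i))"
          using v(6) zarr_regD[OF f im(1)] im by simp
        show "areg a ! k \<in> Hom D" "areg b ! k \<in> Hom D" using zarr_regH[OF a k(1)] zarr_regH[OF b k(2)] by auto
        show "Cod D (areg a ! k) = Dom D (areg f ! i)" "Cod D (areg b ! k) = Dom D (areg f ! i)"
          using zarr_regC[OF a k(1)] zarr_regC[OF b k(2)] zarr_regD[OF f im(1)] i ab by auto
      qed (rule e)
    qed
    show "a = b" using A(1) B(1) ab am sg rg by (metis)
  qed
qed

theorem lemma3p6:
  fixes C :: "'c cat" and n :: nat and f :: "'c zt"
  assumes "category C"
    and "f \<in> degen n C"
  shows "monic (Zit n C) f"
  using assms(2)
proof (induction n arbitrary: f)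
  case 0
  then show ?case using iso_monic[OF lift_category[OF assms(1)]] by (simp add: Zit_def)
next
  case (Suc k)
  have Dk: "category (Zit k C)" using Zit_cat[OF assms(1)] .
  have DS: "category (Zit (Suc k) C)" using Zit_cat[OF assms(1)] .
  have "f \<in> gen (Z (Zit k C)) (simple_degen (Zit k C) \<union> parallel_degen (Zit k C) (degen k C))"
    using Suc.prems by simp
  then show ?case
  proof (induction rule: gen.induct)
    case (base g)
    then show ?case
    proof
      assume "g \<in> simple_degen (Zit k C)"
      then show ?thesis using simple_monic[OF Dk] by (simp add: Zit_Suc)
    next
      assume "g \<in> parallel_degen (Zit k C) (degen k C)"
      then show ?thesis using par_monic[OF Dk] Suc.IH by (simp add: Zit_Suc)
    qed
  next
    case (comp g h)
    then show ?case using comp_monic[OF DS] by (simp add: Zit_Suc)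
  qed
qed

end
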